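(* Let $M$ be the cokernel of the matrix $S_{p_\phi,q_\phi}(t,1)$, viewed as a $\mathbb C[t]$-module, and let $\mathfrak F_\ell(M)$ denote its Fitting ideals. Then $\mathfrak F_0(M)=0$, $\mathfrak F_1(M)=(\Delta(t,1))$ (so $M$ has rank $1$), and $\mathfrak F_\ell(M)=\mathbb C[t]$ for all $\ell>n-\mu$.
   Context: Let $a,b,c\in\mathbb C[s,v]$ be homogeneous of the same degree $n\ge3$, $\gcd(a,b,c)=1$, with $\phi=(a:b:c):\mathbb P^1\to\mathbb P^2$ birational onto its image $\mathcal C$. Let $p,q$ be a $\mu$-basis: a homogeneous basis (degrees $\mu\le n-\mu$) of the free syzygy module of $(a,b,c)$. Put $p_\phi(s,v;t,u)=p_1(s,v)a(t,u)+p_2(s,v)b(t,u)+p_3(s,v)c(t,u)$, similarly $q_\phi$, and let $S_{p_\phi,q_\phi}(t,u)$ be the $n\times n$ Sylvester matrix of $p_\phi,q_\phi$ with respect to $(s,v)$ (matrix of $(\alpha,\beta)\mapsto\alpha p_\phi+\beta q_\phi$ from $\mathbb C[t,u]\otimes\mathbb C[s,v]_{n-\mu-1}\oplus\mathbb C[t,u]\otimes\mathbb C[s,v]_{\mu-1}$ to $\mathbb C[t,u]\otimes\mathbb C[s,v]_{n-1}$). Let $\Delta(t,u)=\mathrm{SRes}(p,q)(a(t,u),b(t,u),c(t,u))$, where $\mathrm{SRes}(p,q)\in\mathbb C[x_1,x_2,x_3]$ is the first principal subresultant coefficient with respect to $(s,v)$ of $\sum_ix_ip_i$ and $\sum_ix_iq_i$.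 The Fitting ideal $\mathfrak F_\ell(M)$ is the ideal generated by the $(n-\ell)$-minors of a presentation matrix with $n$ rows. *)

theory Defs
  imports "HOL-Computational_Algebra.Polynomial_Factorial" "HOL-Computational_Algebra.Field_as_Ring"
          "Jordan_Normal_Form.Determinant"
          "Jordan_Normal_Form.DL_Submatrix"
begin

text \<open>Bivariate forms in \<open>\<complex>[s,v]\<close> are represented as elements of \<open>(\<complex>[v])[s]\<close>,
  i.e. of type \<open>complex poly poly\<close>: the outer variable is \<open>s\<close>, the inner one is \<open>v\<close>.
  The coefficient of \<open>s^i v^j\<close> in \<open>f\<close> is \<open>coeff (coeff f i) j\<close>.\<close>

type_synonym form = "complex poly poly"

definition homogeneous :: "nat \<Rightarrow> form \<Rightarrow> bool" where
  "homogeneous d f \<longleftrightarrow> (\<forall>i j. coeff (coeff f i) j \<noteq> 0 \<longrightarrow> i + j = d)"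

definition feval :: "form \<Rightarrow> complex \<Rightarrow> complex \<Rightarrow> complex" where
  "feval f s0 v0 = poly (map_poly (\<lambda>c. poly c v0) f) s0"

definition dehom :: "form \<Rightarrow> complex poly" where
  "dehom f = map_poly (\<lambda>c. poly c 1) f"

definition proj_eq3 :: "complex \<times> complex \<times> complex \<Rightarrow> complex \<times> complex \<times> complex \<Rightarrow> bool" where
  "proj_eq3 x y \<longleftrightarrow> (case x of (x1,x2,x3) \<Rightarrow> case y of (y1,y2,y3) \<Rightarrow>
      x1*y2 = x2*y1 \<and> x1*y3 = x3*y1 \<and> x2*y3 = x3*y2)"

definition proj_eq1 :: "complex \<times> complex \<Rightarrow> complex \<times> complex \<Rightarrow> bool" where
  "proj_eq1 x y \<longleftrightarrow> fst x * snd y = snd x * fst y"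

definition param :: "form \<Rightarrow> form \<Rightarrow> form \<Rightarrow> complex \<times> complex \<Rightarrow> complex \<times> complex \<times> complex" where
  "param a b c P = (feval a (fst P) (snd P), feval b (fst P) (snd P), feval c (fst P) (snd P))"

text \<open>\<open>\<phi> = (a:b:c) : \<P>^1 \<rightarrow> \<P>^2\<close> is birational onto its image, i.e. it is a proper
  (generically injective) parametrisation: apart from finitely many points of \<open>\<P>^1\<close>,
  no other point of \<open>\<P>^1\<close> has the same image.  (Points of \<open>\<P>^1\<close> are nonzero pairs up
  to scaling; the exceptional set is required to be finite modulo scaling, expressed by
  requiring finitely many exceptional values of \<open>s/v\<close> and \<open>v/s\<close> in the two charts.)\<close>
definition birational_onto_image :: "form \<Rightarrow> form \<Rightarrow> form \<Rightarrow> bool" where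
  "birational_onto_image a b c \<longleftrightarrow>
     (let bad = {P. P \<noteq> (0,0) \<and> (\<exists>Q. Q \<noteq> (0,0) \<and> \<not> proj_eq1 P Q \<and>
                                       proj_eq3 (param a b c P) (param a b c Q))}
      in finite {t. (t,1) \<in> bad} \<and> finite {t. (1,t) \<in> bad})"

definition is_syzygy :: "form \<Rightarrow> form \<Rightarrow> form \<Rightarrow> form \<times> form \<times> form \<Rightarrow> bool" where
  "is_syzygy a b c h \<longleftrightarrow> (case h of (h1,h2,h3) \<Rightarrow> h1*a + h2*b + h3*c = 0)"

definition mu_basis :: "nat \<Rightarrow> nat \<Rightarrow> form \<Rightarrow> form \<Rightarrow> form \<Rightarrow>
     form \<times> form \<times> form \<Rightarrow> form \<times> form \<times> form \<Rightarrow> bool" where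
  "mu_basis n \<mu> a b c p q \<longleftrightarrow>
     \<mu> \<le> n - \<mu> \<and>
     (case p of (p1,p2,p3) \<Rightarrow> homogeneous \<mu> p1 \<and> homogeneous \<mu> p2 \<and> homogeneous \<mu> p3) \<and>
     (case q of (q1,q2,q3) \<Rightarrow> homogeneous (n-\<mu>) q1 \<and> homogeneous (n-\<mu>) q2 \<and> homogeneous (n-\<mu>) q3) \<and>
     is_syzygy a b c p \<and> is_syzygy a b c q \<and>
     (\<forall>h. is_syzygy a b c h \<longrightarrow>
        (\<exists>!(\<alpha>,\<beta>). h = (case p of (p1,p2,p3) \<Rightarrow> case q of (q1,q2,q3) \<Rightarrow>
                       (\<alpha>*p1+\<beta>*q1, \<alpha>*p2+\<beta>*q2, \<alpha>*p3+\<beta>*q3))))"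

text \<open>Coefficient of \<open>s^i v^(d-i)\<close> in \<open>h_\<phi>(s,v;t,1) = h1(s,v) a(t,1) + h2(s,v) b(t,1) + h3(s,v) c(t,1)\<close>,
  for \<open>h\<close> homogeneous of degree \<open>d\<close>; an element of \<open>\<complex>[t]\<close>.\<close>
definition phi_coeff :: "nat \<Rightarrow> form \<Rightarrow> form \<Rightarrow> form \<Rightarrow> form \<times> form \<times> form \<Rightarrow> nat \<Rightarrow> complex poly" where
  "phi_coeff d a b c h i = (if i \<le> d then (case h of (h1,h2,h3) \<Rightarrow>
       [:coeff (coeff h1 i) (d-i):] * dehom a + [:coeff (coeff h2 i) (d-i):] * dehom b
     + [:coeff (coeff h3 i) (d-i):] * dehom c) else 0)"

text \<open>Generic "Sylvester-type" matrix over \<open>\<complex>[t]\<close> of \<open>(\<alpha>,\<beta>) \<mapsto> \<alpha> f + \<beta> g\<close> for forms \<open>f\<close>, \<open>g\<close>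
  in \<open>(s,v)\<close> of degrees \<open>d\<close>, \<open>e\<close> (given by their coefficient functions \<open>F i\<close>, \<open>G i\<close> of
  \<open>s^i v^(d-i)\<close>, \<open>s^i v^(e-i)\<close>), with \<open>\<alpha>\<close> of degree \<open>ka - 1\<close> (\<open>ka\<close> columns, basis
  \<open>s^j v^(ka-1-j)\<close>), \<open>\<beta>\<close> of degree \<open>kb - 1\<close> (\<open>kb\<close> columns).  Rows are indexed by
  the monomials \<open>s^(r+r0) v^(\<dots>)\<close>, \<open>r < nr\<close>.\<close>
definition syl_map_mat :: "nat \<Rightarrow> nat \<Rightarrow> nat \<Rightarrow> nat \<Rightarrow> nat \<Rightarrow> nat \<Rightarrow>
     (nat \<Rightarrow> complex poly) \<Rightarrow> (nat \<Rightarrow> complex poly) \<Rightarrow> complex poly mat" where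
  "syl_map_mat nr r0 d e ka kb F G = mat nr (ka + kb) (\<lambda>(r,j).
      let k = r + r0 in
      if j < ka then (if j \<le> k \<and> k - j \<le> d then F (k - j) else 0)
      else (let j' = j - ka in if j' \<le> k \<and> k - j' \<le> e then G (k - j') else 0))"

text \<open>The \<open>n \<times> n\<close> Sylvester matrix \<open>S_{p_\<phi>,q_\<phi>}(t,1)\<close>: \<open>\<alpha> \<in> \<complex>[s,v]_{n-\<mu>-1}\<close>,
  \<open>\<beta> \<in> \<complex>[s,v]_{\<mu>-1}\<close>, target \<open>\<complex>[s,v]_{n-1}\<close> (rows \<open>s^k v^(n-1-k)\<close>, \<open>k < n\<close>).\<close>
definition sylvester_phi :: "nat \<Rightarrow> nat \<Rightarrow> form \<Rightarrow> form \<Rightarrow> form \<Rightarrow>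
     form \<times> form \<times> form \<Rightarrow> form \<times> form \<times> form \<Rightarrow> complex poly mat" where
  "sylvester_phi n \<mu> a b c p q =
     syl_map_mat n 0 \<mu> (n-\<mu>) (n-\<mu>) \<mu> (phi_coeff \<mu> a b c p) (phi_coeff (n-\<mu>) a b c q)"

text \<open>\<open>\<Delta>(t,1) = SRes(p,q)(a(t,1),b(t,1),c(t,1))\<close>.  The first principal subresultant
  coefficient of forms \<open>f\<close>, \<open>g\<close> of degrees \<open>d\<close>, \<open>e\<close> (\<open>d + e = n\<close>) w.r.t. \<open>(s,v)\<close> is the
  determinant of the matrix of \<open>(\<alpha>,\<beta>) \<mapsto> \<alpha> f + \<beta> g\<close>, \<open>\<alpha>\<close> of degree \<open>e-2\<close>, \<open>\<beta>\<close> of degree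
  \<open>d-2\<close>, into forms of degree \<open>n-2\<close>, keeping the rows of the monomials \<open>s^k v^(n-2-k)\<close>,
  \<open>1 \<le> k \<le> n-2\<close> (i.e. deleting the row of \<open>v^(n-2)\<close>).  Since evaluation
  \<open>x \<mapsto> (a(t,1),b(t,1),c(t,1))\<close> is a ring homomorphism commuting with the determinant,
  \<open>\<Delta>(t,1)\<close> is obtained by forming this determinant directly for \<open>f = p_\<phi>(\<cdot>;t,1)\<close>,
  \<open>g = q_\<phi>(\<cdot>;t,1)\<close>.\<close>
definition Delta1 :: "nat \<Rightarrow> nat \<Rightarrow> form \<Rightarrow> form \<Rightarrow> form \<Rightarrow>
     form \<times> form \<times> form \<Rightarrow> form \<times> form \<times> form \<Rightarrow> complex poly" where
  "Delta1 n \<mu> a b c p q =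
     det (syl_map_mat (n-2) 1 \<mu> (n-\<mu>) (n-\<mu>-1) (\<mu>-1) (phi_coeff \<mu> a b c p) (phi_coeff (n-\<mu>) a b c q))"

definition ideal_gen :: "'a::comm_ring_1 set \<Rightarrow> 'a set" where
  "ideal_gen S = {(\<Sum>x\<in>T. r x * x) | T r. finite T \<and> T \<subseteq> S}"

definition minors :: "'a::comm_ring_1 mat \<Rightarrow> nat \<Rightarrow> 'a set" where
  "minors A k = {det (submatrix A I J) | I J. I \<subseteq> {..<dim_row A} \<and> J \<subseteq> {..<dim_col A}
                   \<and> card I = k \<and> card J = k}"

text \<open>Fitting ideal \<open>\<FF>_\<ell>\<close> of the cokernel of a presentation matrix \<open>A\<close> with \<open>n\<close> rows:
  generated by the \<open>(n-\<ell>)\<close>-minors (for \<open>\<ell> \<ge> n\<close> this is the unit ideal, the empty minor being 1).\<close>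
definition fitting_ideal :: "'a::comm_ring_1 mat \<Rightarrow> nat \<Rightarrow> 'a set" where
  "fitting_ideal A l = ideal_gen (minors A (dim_row A - l))"

end

theory Submission imports Defs "HOL-Computational_Algebra.Fundamental_Theorem_Algebra" begin

definition ext :: "(nat \<Rightarrow> 'a::zero) \<Rightarrow> nat \<Rightarrow> nat \<Rightarrow> 'a" where
  "ext F k j = (if j \<le> k then F (k - j) else 0)"

lemma syl_dims[simp]: "dim_row (syl_map_mat nr r0 d e ka kb F G) = nr"
  "dim_col (syl_map_mat nr r0 d e ka kb F G) = ka + kb"
  "syl_map_mat nr r0 d e ka kb F G \<in> carrier_mat nr (ka + kb)"
  unfolding syl_map_mat_def by auto

lemma syl_index:
  assumes "r < nr" "j < ka + kb" "\<forall>x>d. F x = 0" "\<forall>x>e. G x = 0"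
  shows "syl_map_mat nr r0 d e ka kb F G $$ (r,j) =
     (if j < ka then ext F (r+r0) j else ext G (r+r0) (j-ka))"
  using assms unfolding syl_map_mat_def ext_def Let_def
  by (auto simp: not_le)

lemma ext_step:
  fixes F Ft :: "nat \<Rightarrow> 'a::comm_ring_1"
  assumes rel: "\<forall>i. F i = (if i = 0 then 0 else Ft (i - 1)) - c * Ft i"
    and top: "\<not> k < nr' \<Longrightarrow> j \<le> k \<Longrightarrow> Ft (k - j) = 0"
  shows "(if k < nr' then - c * ext Ft k j else 0) + (if 1 \<le> k then ext Ft (k - 1) j else 0)
         = ext F k j"
proof (cases "j \<le> k")
  case True
  show ?thesis
  proof (cases "j = k")
    case True
    then show ?thesis using rel[rule_format, of 0] top by (auto simp: ext_def)
  next
    case False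
    with True have "j < k" by simp
    then have "F (k - j) = Ft (k - 1 - j) - c * Ft (k - j)"
      using rel[rule_format, of "k-j"] by auto
    then show ?thesis using \<open>j < k\<close> top by (auto simp: ext_def)
  qed
next
  case False
  then show ?thesis by (auto simp: ext_def)
qed

definition Lc :: "'a::comm_ring_1 \<Rightarrow> nat \<Rightarrow> 'a" where
  "Lc c i = (if i = 0 then - c else if i = 1 then 1 else 0)"

lemma sum_two_pts:
  fixes B :: "nat \<Rightarrow> 'a::comm_ring_1"
  shows "(\<Sum>k<N. ext (Lc c) m k * B k) =
     (if m < N then - c * B m else 0) + (if 1 \<le> m \<and> m - 1 < N then B (m - 1) else 0)"
proof -
  have "\<And>k. ext (Lc c) m k * B k = (if k = m then - c * B m else 0) + (if k = m - 1 \<and> 1 \<le> m then B (m-1) else 0)"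
    by (auto simp: ext_def Lc_def)
  then have "(\<Sum>k<N. ext (Lc c) m k * B k) = (\<Sum>k<N. (if k = m then - c * B m else 0)) + (\<Sum>k<N. (if k = m - 1 \<and> 1 \<le> m then B (m-1) else 0))"
    by (simp add: sum.distrib)
  also have "\<dots> = (if m < N then - c * B m else 0) + (if 1 \<le> m \<and> m - 1 < N then B (m - 1) else 0)"
    by (auto simp: sum.delta)
  finally show ?thesis .
qed

lemma syl_factor:
  fixes F G Ft Gt :: "nat \<Rightarrow> complex poly"
  assumes relF: "\<forall>i. F i = (if i = 0 then 0 else Ft (i - 1)) - c * Ft i"
    and relG: "\<forall>i. G i = (if i = 0 then 0 else Gt (i - 1)) - c * Gt i"
    and vF: "\<forall>x>d'. Ft x = 0" and vG: "\<forall>x>e'. Gt x = 0"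
    and r0: "r0 \<le> 1" and nr: "nr + r0 \<le> nr' + 1"
    and kaF: "ka + d' \<le> nr'" and kbG: "kb + e' \<le> nr'"
  shows "syl_map_mat nr r0 1 0 nr' 0 (Lc c) (\<lambda>_. 0) * syl_map_mat nr' 0 d' e' ka kb Ft Gt
       = syl_map_mat nr r0 (Suc d') (Suc e') ka kb F G"
proof (rule eq_matI)
  have vF': "\<forall>x>Suc d'. F x = 0" using relF vF by auto
  have vG': "\<forall>x>Suc e'. G x = 0" using relG vG by auto
  have vL: "\<forall>x>1. Lc c x = 0" by (auto simp: Lc_def)
  fix r j assume r: "r < dim_row (syl_map_mat nr r0 (Suc d') (Suc e') ka kb F G)"
    and j: "j < dim_col (syl_map_mat nr r0 (Suc d') (Suc e') ka kb F G)"
  then have r: "r < nr" and j: "j < ka + kb" by auto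
  let ?L = "syl_map_mat nr r0 1 0 nr' 0 (Lc c) (\<lambda>_. 0)"
  let ?B = "syl_map_mat nr' 0 d' e' ka kb Ft Gt"
  have "(?L * ?B) $$ (r,j) = (\<Sum>k<nr'. ?L $$ (r,k) * ?B $$ (k,j))"
    using r j by (simp add: scalar_prod_def atLeast0LessThan)
  also have "\<dots> = (\<Sum>k<nr'. ext (Lc c) (r+r0) k * (if j < ka then ext Ft k j else ext Gt k (j-ka)))"
    by (rule sum.cong[OF refl], subst syl_index, insert r j vL vF vG, auto simp: syl_index)
  also have "\<dots> = (if r+r0 < nr' then - c * (if j < ka then ext Ft (r+r0) j else ext Gt (r+r0) (j-ka)) else 0)
     + (if 1 \<le> r+r0 then (if j < ka then ext Ft (r+r0-1) j else ext Gt (r+r0-1) (j-ka)) else 0)"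
    using sum_two_pts[of c "r+r0" "\<lambda>k. (if j < ka then ext Ft k j else ext Gt k (j-ka))" nr'] r nr
    by auto
  also have "\<dots> = (if j < ka then ext F (r+r0) j else ext G (r+r0) (j-ka))"
  proof (cases "j < ka")
    case True
    have "(if r+r0 < nr' then - c * ext Ft (r+r0) j else 0) + (if 1 \<le> r+r0 then ext Ft (r+r0 - 1) j else 0)
         = ext F (r+r0) j"
      by (rule ext_step[OF relF], insert True vF kaF r nr, auto)
    then show ?thesis using True by (auto split: if_splits)
  next
    case False
    have "(if r+r0 < nr' then - c * ext Gt (r+r0) (j-ka) else 0) + (if 1 \<le> r+r0 then ext Gt (r+r0 - 1) (j-ka) else 0)
         = ext G (r+r0) (j-ka)"
      by (rule ext_step[OF relG], insert False j vG kbG r nr, auto)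
    then show ?thesis using False by (auto split: if_splits)
  qed
  also have "\<dots> = syl_map_mat nr r0 (Suc d') (Suc e') ka kb F G $$ (r,j)"
    by (rule syl_index[symmetric], insert r j vF' vG', auto)
  finally show "(?L * ?B) $$ (r,j) = syl_map_mat nr r0 (Suc d') (Suc e') ka kb F G $$ (r,j)" .
qed auto

definition cdel :: "'a mat \<Rightarrow> nat \<Rightarrow> 'a mat" where
  "cdel A i = mat (dim_row A) (dim_col A - 1) (\<lambda>(r,j). A $$ (r, insert_index i j))"

definition bord :: "nat \<Rightarrow> 'a::comm_ring_1 mat \<Rightarrow> 'a mat" where
  "bord i A = mat (Suc (dim_row A)) (dim_col A) (\<lambda>(r,j). if r = 0 then (if j = i then 1 else 0) else A $$ (r-1,j))"

lemma det_bord: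
  fixes A :: "'a::comm_ring_1 mat"
  assumes A: "A \<in> carrier_mat m (Suc m)" and i: "i < Suc m"
  shows "det (bord i A) = (-1)^i * det (cdel A i)"
proof -
  have B: "bord i A \<in> carrier_mat (Suc m) (Suc m)" using A by (auto simp: bord_def)
  have "det (bord i A) = (\<Sum>j<Suc m. bord i A $$ (0,j) * cofactor (bord i A) 0 j)"
    by (rule laplace_expansion_row[OF B], simp)
  also have "\<dots> = (\<Sum>j<Suc m. if j = i then cofactor (bord i A) 0 j else 0)"
    by (rule sum.cong, insert A, auto simp: bord_def)
  also have "\<dots> = cofactor (bord i A) 0 i" using i by simp
  finally have 1: "det (bord i A) = cofactor (bord i A) 0 i" .
  have "mat_delete (bord i A) 0 i = cdel A i"
    by (rule eq_matI, insert A, auto simp: mat_delete_def bord_def cdel_def insert_index_def)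
  with 1 show ?thesis by (simp add: cofactor_def)
qed

lemma ker_minor_rel:
  fixes A :: "'a::comm_ring_1 mat"
  assumes A: "A \<in> carrier_mat m (Suc m)" and x: "x \<in> carrier_vec (Suc m)"
    and ker: "A *\<^sub>v x = 0\<^sub>v m" and i: "i < Suc m" and i': "i' < Suc m"
  shows "x $ i' * ((-1)^i * det (cdel A i)) = x $ i * ((-1)^i' * det (cdel A i'))"
proof -
  let ?B = "bord i A"
  have B: "?B \<in> carrier_mat (Suc m) (Suc m)" using A by (auto simp: bord_def)
  have Bx: "?B *\<^sub>v x = vec (Suc m) (\<lambda>r. if r = 0 then x $ i else 0)"
  proof (rule eq_vecI)
    fix r assume "r < dim_vec (vec (Suc m) (\<lambda>r. if r = 0 then x $ i else 0))"
    then have r: "r < Suc m" by simp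
    show "(?B *\<^sub>v x) $ r = vec (Suc m) (\<lambda>r. if r = 0 then x $ i else 0) $ r"
    proof (cases "r = 0")
      case True
      have "(?B *\<^sub>v x) $ r = (\<Sum>j<Suc m. (if j = i then 1 else 0) * x $ j)"
        using True A x B by (simp add: scalar_prod_def bord_def atLeast0LessThan Matrix.row_def)
      also have "\<dots> = (\<Sum>j<Suc m. if j = i then x $ j else 0)" by (rule sum.cong) auto
      also have "\<dots> = x $ i" using i by simp
      finally show ?thesis using True by simp
    next
      case False
      have "(?B *\<^sub>v x) $ r = (A *\<^sub>v x) $ (r - 1)"
        using False r A x B by (simp add: scalar_prod_def bord_def atLeast0LessThan Matrix.row_def)
      also have "\<dots> = 0" using ker False r by simp
      finally show ?thesis using False r by simp
    qed
  qed (insert B, auto)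
  let ?C = "replace_col ?B (?B *\<^sub>v x) i'"
  have C: "?C \<in> carrier_mat (Suc m) (Suc m)" using B by (auto simp: replace_col_def)
  have "det ?C = x $ i' * det ?B" by (rule cramer_lemma_mat[OF B x i'])
  also have "\<dots> = x $ i' * ((-1)^i * det (cdel A i))" using det_bord[OF A i] by simp
  finally have 1: "det ?C = x $ i' * ((-1)^i * det (cdel A i))" .
  have "det ?C = (\<Sum>r<Suc m. ?C $$ (r,i') * cofactor ?C r i')"
    by (rule laplace_expansion_column[OF C i'])
  also have "\<dots> = (\<Sum>r<Suc m. if r = 0 then x $ i * cofactor ?C 0 i' else 0)"
    by (rule sum.cong, insert B i', auto simp: replace_col_def Bx)
  also have "\<dots> = x $ i * cofactor ?C 0 i'" by simp
  finally have 3: "det ?C = x $ i * cofactor ?C 0 i'" .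
  have "mat_delete ?C 0 i' = cdel A i'"
    by (rule eq_matI, insert A B, auto simp: mat_delete_def bord_def cdel_def insert_index_def replace_col_def)
  with 3 have 2: "det ?C = x $ i * ((-1)^i' * det (cdel A i'))" by (simp add: cofactor_def)
  from 1 2 show ?thesis by simp
qed

lemma pick_char:
  assumes mono: "\<And>i j. i < j \<Longrightarrow> j \<le> m \<Longrightarrow> f i < f j"
    and mem: "\<And>i. i \<le> m \<Longrightarrow> f i \<in> S"
    and cover: "\<And>a. a \<in> S \<Longrightarrow> a < f m \<Longrightarrow> \<exists>i<m. a = f i"
  shows "pick S m = f m"
proof -
  have cov: "\<exists>i<k. a = f i" if k: "k \<le> m" and a: "a \<in> S" "a < f k" for k a
  proof -
    have "a < f m" using a k mono[of k m] by (cases "k = m") auto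
    then obtain i where i: "i < m" "a = f i" using cover a by blast
    have "i < k"
    proof (rule ccontr)
      assume "\<not> i < k"
      then have "k \<le> i" by simp
      then have "f k \<le> f i" using mono[of k i] i by (cases "k = i") auto
      then show False using a i by simp
    qed
    then show ?thesis using i by blast
  qed
  have "\<forall>k\<le>m. pick S k = f k"
  proof (intro allI impI)
    fix k assume "k \<le> m"
    then show "pick S k = f k"
    proof (induction k)
      case 0
      show ?case unfolding pick.simps
      proof (rule Least_equality)
        show "f 0 \<in> S" using mem by simp
        fix y assume y: "y \<in> S"
        show "f 0 \<le> y"
        proof (rule ccontr)
          assume "\<not> f 0 \<le> y"
          then obtain i :: nat where "i < 0" using cov[of 0 y] y by auto
          then show False by simp
        qed
      qed
    next
      case (Suc k)
      then have IH: "pick S k = f k" by simp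
      show ?case unfolding pick.simps IH
      proof (rule Least_equality)
        show "f (Suc k) \<in> S \<and> f k < f (Suc k)" using mem mono Suc.prems by auto
        fix y assume y: "y \<in> S \<and> f k < y"
        show "f (Suc k) \<le> y"
        proof (rule ccontr)
          assume "\<not> f (Suc k) \<le> y"
          then obtain i where i: "i < Suc k" "y = f i" using cov[of "Suc k" y] y Suc.prems by auto
          then have "f i \<le> f k" using mono[of i k] Suc.prems by (cases "i = k") auto
          then show False using y i by simp
        qed
      qed
    qed
  qed
  then show ?thesis by simp
qed

lemma pick_UNIV: "pick UNIV i = i"
  by (rule pick_char[where f = id and m = i, simplified]) auto

lemma pick_lessThan: "i < N \<Longrightarrow> pick {..<N} i = i"
  by (rule pick_char[where f = id and m = i, simplified]) auto

lemma pick_delete: "c < M \<Longrightarrow> j < M - 1 \<Longrightarrow> pick ({..<M} - {c}) j = insert_index c j"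
proof (rule pick_char[where f = "insert_index c" and m = j])
  fix a assume "a \<in> {..<M} - {c}" "a < insert_index c j"
  then show "\<exists>i<j. a = insert_index c i"
  proof (cases "a < c")
    case True
    then show ?thesis using \<open>a < insert_index c j\<close> by (intro exI[of _ a]) (auto simp: insert_index_def split: if_splits)
  next
    case False
    then have "c < a" using \<open>a \<in> {..<M} - {c}\<close> by auto
    then show ?thesis using \<open>a < insert_index c j\<close> by (intro exI[of _ "a - 1"]) (auto simp: insert_index_def split: if_splits)
  qed
qed (auto simp: insert_index_def)

lemma pick_interval: "i < k \<Longrightarrow> pick {x..<x+k} i = x + i"
proof (rule pick_char[where f = "\<lambda>i. x + i" and m = i])
  fix a assume "a \<in> {x..<x+k}" "a < x + i"
  then show "\<exists>j<i. a = x + j" by (intro exI[of _ "a - x"]) auto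
qed auto

lemma submatrix_mult:
  assumes A: "A \<in> carrier_mat m l" and B: "B \<in> carrier_mat l k"
    and I: "I \<subseteq> {..<m}" and J: "J \<subseteq> {..<k}"
  shows "submatrix (A * B) I J = submatrix A I UNIV * submatrix B UNIV J"
proof -
  have cI: "{i. i < m \<and> i \<in> I} = I" using I by auto
  have cJ: "{i. i < k \<and> i \<in> J} = J" using J by auto
  have cU: "{i. i < l \<and> i \<in> (UNIV::nat set)} = {..<l}" by auto
  show ?thesis
  proof (rule eq_matI)
    fix i j assume i: "i < dim_row (submatrix A I UNIV * submatrix B UNIV J)"
      and j: "j < dim_col (submatrix A I UNIV * submatrix B UNIV J)"
    then have i: "i < card I" and j: "j < card J" using A B by (auto simp: dim_submatrix cI cJ)
    have pI: "pick I i < m" using pick_in_set_le[OF i] I by auto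
    have pJ: "pick J j < k" using pick_in_set_le[OF j] J by auto
    show "submatrix (A * B) I J $$ (i, j) = (submatrix A I UNIV * submatrix B UNIV J) $$ (i, j)"
      using A B i j pI pJ
      by (auto simp: submatrix_def cI cJ cU scalar_prod_def pick_UNIV intro!: sum.cong)
  qed (insert A B, auto simp: dim_submatrix cI cJ)
qed

lemma submatrix_UNIV_rows: "submatrix A UNIV J = submatrix A {..<dim_row A} J"
  by (rule eq_matI, auto simp: submatrix_def pick_UNIV pick_lessThan)

lemma submatrix_cdel:
  assumes A: "A \<in> carrier_mat N (Suc N)" and c: "c < Suc N"
  shows "submatrix A {..<N} ({..<Suc N} - {c}) = cdel A c"
proof -
  have cJ: "{j. j < Suc N \<and> j \<in> {..<Suc N} - {c}} = {..<Suc N} - {c}" by auto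
  have cJ': "{j. j < Suc N \<and> j \<noteq> c} = {..<Suc N} - {c}" by auto
  have card: "card ({..<Suc N} - {c}) = N" using c by simp
  show ?thesis
    by (rule eq_matI, insert A c, auto simp: submatrix_def cdel_def cJ cJ' card pick_lessThan pick_delete)
qed

lemma sum_split_add: "(\<Sum>j<a+(b::nat). f j) = (\<Sum>j<a. f j) + (\<Sum>j<b. f (a+j))"
  by (induction b) (auto simp: add.assoc)

lemma conv_eq:
  fixes F G :: "nat \<Rightarrow> 'a::comm_ring_1"
  assumes "\<forall>x>a. G x = 0"
  shows "(\<Sum>j<Suc a. ext F r j * G j) = (\<Sum>j<Suc r. F (r-j) * G j)"
proof -
  have "(\<Sum>j<Suc a. ext F r j * G j) = (\<Sum>j<Suc (a+r). ext F r j * G j)"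
    by (rule sum.mono_neutral_right[symmetric], insert assms, auto)
  also have "\<dots> = (\<Sum>j<Suc r. ext F r j * G j)"
    by (rule sum.mono_neutral_right, auto simp: ext_def)
  also have "\<dots> = (\<Sum>j<Suc r. F (r-j) * G j)"
    by (rule sum.cong, auto simp: ext_def)
  finally show ?thesis .
qed

definition kv :: "nat \<Rightarrow> (nat \<Rightarrow> 'a::comm_ring_1) \<Rightarrow> (nat \<Rightarrow> 'a) \<Rightarrow> nat \<Rightarrow> 'a" where
  "kv a2 Ft Gt c = (if c < Suc a2 then Gt c else - Ft (c - Suc a2))"

lemma St_kernel:
  fixes Ft Gt :: "nat \<Rightarrow> complex poly"
  assumes vF: "\<forall>x>a1. Ft x = 0" and vG: "\<forall>x>a2. Gt x = 0"
  shows "syl_map_mat N 0 a1 a2 (Suc a2) (Suc a1) Ft Gt *\<^sub>v vec (Suc a2 + Suc a1) (kv a2 Ft Gt) = 0\<^sub>v N"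
proof (rule eq_vecI)
  fix r assume "r < dim_vec (0\<^sub>v N :: complex poly vec)"
  then have r: "r < N" by simp
  let ?A = "syl_map_mat N 0 a1 a2 (Suc a2) (Suc a1) Ft Gt"
  have "(?A *\<^sub>v vec (Suc a2 + Suc a1) (kv a2 Ft Gt)) $ r = (\<Sum>j<Suc a2 + Suc a1. ?A $$ (r,j) * kv a2 Ft Gt j)"
    using r by (simp add: scalar_prod_def atLeast0LessThan)
  also have "\<dots> = (\<Sum>j<Suc a2. ?A $$ (r,j) * kv a2 Ft Gt j) + (\<Sum>j<Suc a1. ?A $$ (r,Suc a2 + j) * kv a2 Ft Gt (Suc a2 + j))"
    by (rule sum_split_add)
  also have "\<dots> = (\<Sum>j<Suc a2. ext Ft r j * Gt j) - (\<Sum>j<Suc a1. ext Gt r j * Ft j)"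
    using r vF vG by (simp add: syl_index kv_def sum_negf[symmetric])
  also have "(\<Sum>j<Suc a2. ext Ft r j * Gt j) = (\<Sum>j<Suc r. Ft (r-j) * Gt j)" by (rule conv_eq[OF vG])
  also have "(\<Sum>j<Suc a1. ext Gt r j * Ft j) = (\<Sum>j<Suc r. Gt (r-j) * Ft j)" by (rule conv_eq[OF vF])
  also have "(\<Sum>j<Suc r. Gt (r-j) * Ft j) = (\<Sum>j<Suc r. Gt (r - (Suc r - Suc j)) * Ft (Suc r - Suc j))"
    by (rule sum.nat_diff_reindex[symmetric])
  also have "\<dots> = (\<Sum>j<Suc r. Ft (r-j) * Gt j)" by (rule sum.cong, auto)
  finally show "(?A *\<^sub>v vec (Suc a2 + Suc a1) (kv a2 Ft Gt)) $ r = 0\<^sub>v N $ r" using r by simp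
qed auto

lemma ig_base: "x \<in> S \<Longrightarrow> x \<in> ideal_gen S"
  unfolding ideal_gen_def by (rule CollectI, rule exI[of _ "{x}"], rule exI[of _ "\<lambda>_. 1"], auto)

lemma ig_zero: "0 \<in> ideal_gen S"
  unfolding ideal_gen_def by (rule CollectI, rule exI[of _ "{}"], auto)

lemma ig_mult: "x \<in> ideal_gen S \<Longrightarrow> c * x \<in> ideal_gen S"
  unfolding ideal_gen_def
proof (elim CollectE exE conjE)
  fix T r assume "x = (\<Sum>y\<in>T. r y * y)" "finite T" "T \<subseteq> S"
  then show "c * x \<in> {\<Sum>x\<in>T. r x * x |T r. finite T \<and> T \<subseteq> S}"
    by (intro CollectI exI[of _ T] exI[of _ "\<lambda>y. c * r y"]) (auto simp: sum_distrib_left mult.assoc)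
qed

lemma ig_add: "x \<in> ideal_gen S \<Longrightarrow> y \<in> ideal_gen S \<Longrightarrow> x + y \<in> ideal_gen S"
  unfolding ideal_gen_def
proof (elim CollectE exE conjE)
  fix T r T' r' assume x: "x = (\<Sum>y\<in>T. r y * y)" "finite T" "T \<subseteq> S"
    and y: "y = (\<Sum>y\<in>T'. r' y * y)" "finite T'" "T' \<subseteq> S"
  let ?r = "\<lambda>z. (if z \<in> T then r z else 0) + (if z \<in> T' then r' z else 0)"
  have "(\<Sum>z\<in>T \<union> T'. ?r z * z) = (\<Sum>z\<in>T \<union> T'. (if z \<in> T then r z * z else 0)) + (\<Sum>z\<in>T \<union> T'. (if z \<in> T' then r' z * z else 0))"
  proof -
    have "\<And>z. ?r z * z = (if z \<in> T then r z * z else 0) + (if z \<in> T' then r' z * z else 0)"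
      by (auto simp: distrib_right)
    then show ?thesis by (simp add: sum.distrib)
  qed
  also have "(\<Sum>z\<in>T \<union> T'. (if z \<in> T then r z * z else 0)) = x"
    using x y by (simp add: sum.If_cases Int_absorb1)
  also have "(\<Sum>z\<in>T \<union> T'. (if z \<in> T' then r' z * z else 0)) = y"
    using x y by (simp add: sum.If_cases Int_absorb1)
  finally show "x + y \<in> {\<Sum>x\<in>T. r x * x |T r. finite T \<and> T \<subseteq> S}"
    using x y by (intro CollectI exI[of _ "T \<union> T'"] exI[of _ ?r]) auto
qed

lemma ig_sum: "finite T \<Longrightarrow> (\<And>x. x \<in> T \<Longrightarrow> f x \<in> ideal_gen S) \<Longrightarrow> sum f T \<in> ideal_gen S"
  by (induction T rule: finite_induct) (auto intro: ig_zero ig_add)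

lemma ig_sub: assumes "S \<subseteq> ideal_gen U" shows "ideal_gen S \<subseteq> ideal_gen U"
proof
  fix x assume "x \<in> ideal_gen S"
  then obtain T r where x: "x = (\<Sum>y\<in>T. r y * y)" "finite T" "T \<subseteq> S" unfolding ideal_gen_def by auto
  show "x \<in> ideal_gen U" unfolding x(1) by (rule ig_sum, insert x assms, auto intro: ig_mult)
qed

lemma ig_single: "ideal_gen {a} = {c * a | c. True}"
proof
  show "ideal_gen {a} \<subseteq> {c * a |c. True}"
  proof
    fix x assume "x \<in> ideal_gen {a}"
    then obtain T r where x: "x = (\<Sum>y\<in>T. r y * y)" "T \<subseteq> {a}" unfolding ideal_gen_def by auto
    show "x \<in> {c * a |c. True}"
    proof (cases "T = {}")
      case True then show ?thesis using x by (auto intro: exI[of _ 0])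
    next
      case False then have "T = {a}" using x by auto
      then show ?thesis using x by auto
    qed
  qed
  show "{c * a |c. True} \<subseteq> ideal_gen {a}"
  proof
    fix x assume "x \<in> {c * a |c. True}"
    then obtain c where "x = c * a" by auto
    then show "x \<in> ideal_gen {a}" using ig_mult[OF ig_base[of a "{a}"], of c] by auto
  qed
qed

lemma ig_UNIV: "1 \<in> ideal_gen S \<Longrightarrow> ideal_gen S = UNIV"
  using ig_mult[of 1 S] by auto

lemma det_row_single:
  fixes C :: "'a::comm_ring_1 mat"
  assumes C: "C \<in> carrier_mat N N" and i: "i < N" and j0: "j0 < N"
    and row: "\<And>j. j < N \<Longrightarrow> C $$ (i,j) = (if j = j0 then v else 0)"
  shows "det C = v * (-1)^(i+j0) * det (mat_delete C i j0)"
proof -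
  have "det C = (\<Sum>j<N. C $$ (i,j) * cofactor C i j)" by (rule laplace_expansion_row[OF C i])
  also have "\<dots> = (\<Sum>j<N. if j = j0 then v * cofactor C i j else 0)" by (rule sum.cong, auto simp: row)
  also have "\<dots> = v * cofactor C i j0" using j0 by simp
  finally show ?thesis by (simp add: cofactor_def)
qed

lemma det_row_zero:
  fixes C :: "'a::comm_ring_1 mat"
  assumes C: "C \<in> carrier_mat N N" and i: "i < N"
    and row: "\<And>j. j < N \<Longrightarrow> C $$ (i,j) = 0"
  shows "det C = 0"
proof -
  have "det C = (\<Sum>j<N. C $$ (i,j) * cofactor C i j)" by (rule laplace_expansion_row[OF C i])
  also have "\<dots> = 0" by (rule sum.neutral, auto simp: row)
  finally show ?thesis .
qed

lemma cdel_dims[simp]: "dim_row (cdel A c) = dim_row A" "dim_col (cdel A c) = dim_col A - 1"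
  by (auto simp: cdel_def)

lemma cdel_carrier: "A \<in> carrier_mat m (Suc m) \<Longrightarrow> cdel A c \<in> carrier_mat m m"
  by (auto simp: cdel_def)

lemma cdel_index: "r < dim_row A \<Longrightarrow> j < dim_col A - 1 \<Longrightarrow> cdel A c $$ (r,j) = A $$ (r, insert_index c j)"
  by (auto simp: cdel_def)

lemma main_minors:
  fixes Ft Gt :: "nat \<Rightarrow> complex poly"
  assumes vF: "\<forall>x>a1. Ft x = 0" and vG: "\<forall>x>a2. Gt x = 0" and pos: "1 \<le> a1 + a2"
    and c: "c < Suc (Suc (a1+a2))"
  shows "(-1)^c * det (cdel (syl_map_mat (Suc (a1+a2)) 0 a1 a2 (Suc a2) (Suc a1) Ft Gt) c)
       = (-1)^a2 * det (syl_map_mat (a1+a2) 0 a1 a2 a2 a1 Ft Gt) * kv a2 Ft Gt c"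
proof -
  define N where "N = Suc (a1+a2)"
  define St where "St = syl_map_mat (Suc (a1+a2)) 0 a1 a2 (Suc a2) (Suc a1) Ft Gt"
  define R where "R = syl_map_mat (a1+a2) 0 a1 a2 a2 a1 Ft Gt"
  have St: "St \<in> carrier_mat N (Suc N)" unfolding St_def N_def carrier_mat_def by simp
  have R: "R \<in> carrier_mat (a1+a2) (a1+a2)" unfolding R_def carrier_mat_def by simp
  have Sti: "St $$ (r,j) = (if j < Suc a2 then ext Ft r j else ext Gt r (j - Suc a2))"
    if "r < N" "j < Suc N" for r j
    unfolding St_def using syl_index[of r "Suc(a1+a2)" j "Suc a2" "Suc a1" a1 Ft a2 Gt 0] that vF vG by (simp add: N_def)
  have Ri: "R $$ (r,j) = (if j < a2 then ext Ft r j else ext Gt r (j - a2))"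
    if "r < a1+a2" "j < a1+a2" for r j
    unfolding R_def using syl_index[of r "a1+a2" j "a2" "a1" a1 Ft a2 Gt 0] that vF vG by (simp add: add.commute)
  have x: "vec (Suc N) (kv a2 Ft Gt) \<in> carrier_vec (Suc N)" by simp
  have ker: "St *\<^sub>v vec (Suc N) (kv a2 Ft Gt) = 0\<^sub>v N"
    using St_kernel[OF vF vG, of N] unfolding St_def N_def by (simp add: add.commute)
  have cN: "c < Suc N" using c by (simp add: N_def)
  have LA: "det (cdel St a2) = Gt a2 * det R"
  proof -
    have C: "cdel St a2 \<in> carrier_mat N N" by (rule cdel_carrier[OF St])
    have "det (cdel St a2) = Gt a2 * (-1)^(a1+a2+(a1+a2)) * det (mat_delete (cdel St a2) (a1+a2) (a1+a2))"
    proof (rule det_row_single[OF C])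
      fix j assume j: "j < N"
      show "cdel St a2 $$ (a1 + a2, j) = (if j = a1 + a2 then Gt a2 else 0)"
        using j St vG vF by (auto simp: cdel_index Sti N_def insert_index_def ext_def carrier_matD[OF St])
    qed (auto simp: N_def)
    also have "mat_delete (cdel St a2) (a1+a2) (a1+a2) = R"
      by (rule eq_matI, insert St R, auto simp: mat_delete_def cdel_index Sti Ri N_def insert_index_def carrier_matD[OF St])
    finally show ?thesis by (simp add: power_add[symmetric] mult_2[symmetric] power_mult)
  qed
  have LB: "det (cdel St N) = (-1)^a1 * Ft a1 * det R"
  proof -
    have C: "cdel St N \<in> carrier_mat N N" by (rule cdel_carrier[OF St])
    have "det (cdel St N) = Ft a1 * (-1)^(a1+a2+a2) * det (mat_delete (cdel St N) (a1+a2) a2)"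
    proof (rule det_row_single[OF C])
      fix j assume j: "j < N"
      show "cdel St N $$ (a1 + a2, j) = (if j = a2 then Ft a1 else 0)"
        using j St vG vF by (auto simp: cdel_index Sti N_def insert_index_def ext_def carrier_matD[OF St])
    qed (auto simp: N_def)
    also have "mat_delete (cdel St N) (a1+a2) a2 = R"
      by (rule eq_matI, insert St R, auto simp: mat_delete_def cdel_index Sti Ri N_def insert_index_def carrier_matD[OF St])
    finally show ?thesis by (simp add: power_add mult_2[symmetric] power_mult)
  qed
  have rel: "kv a2 Ft Gt i' * ((-1)^c * det (cdel St c)) = kv a2 Ft Gt c * ((-1)^i' * det (cdel St i'))"
    if "i' < Suc N" for i'
    using ker_minor_rel[OF St x ker cN that] cN that by simp
  show ?thesis
  proof (cases "Gt a2 \<noteq> 0")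
    case True
    have "Gt a2 * ((-1)^c * det (cdel St c)) = kv a2 Ft Gt c * ((-1)^a2 * (Gt a2 * det R))"
      using rel[of a2] LA by (simp add: kv_def N_def)
    then have "Gt a2 * ((-1)^c * det (cdel St c)) = Gt a2 * ((-1)^a2 * det R * kv a2 Ft Gt c)"
      by (simp add: ac_simps)
    then show ?thesis using True unfolding St_def R_def by simp
  next
    case False
    then have G0: "Gt a2 = 0" by simp
    show ?thesis
    proof (cases "Ft a1 \<noteq> 0")
      case True
      have kN: "kv a2 Ft Gt N = - Ft a1" by (simp add: kv_def N_def)
      have e: "(-1::complex poly)^a1 * (-1)^a1 = 1" by (simp add: power_mult_distrib[symmetric])
      have sgn: "(-1::complex poly)^N * (-1)^a1 = - ((-1)^a2)"
        using e by (simp add: N_def power_add)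
      have "- Ft a1 * ((-1)^c * det (cdel St c)) = kv a2 Ft Gt c * ((-1)^N * ((-1)^a1 * Ft a1 * det R))"
        using rel[of N] LB kN by simp
      also have "\<dots> = kv a2 Ft Gt c * (((-1)^N * (-1)^a1) * Ft a1 * det R)" by (simp add: ac_simps)
      also have "\<dots> = - Ft a1 * ((-1)^a2 * det R * kv a2 Ft Gt c)" unfolding sgn by (simp add: ac_simps)
      finally show ?thesis using True unfolding St_def R_def by simp
    next
      case False
      then have F0: "Ft a1 = 0" by simp
      have F0': "Ft x = 0" if "x \<ge> a1" for x using F0 vF that by (cases "x = a1") auto
      have G0': "Gt x = 0" if "x \<ge> a2" for x using G0 vG that by (cases "x = a2") auto
      have "det (cdel St c) = 0"
      proof (rule det_row_zero[OF cdel_carrier[OF St], of "a1+a2"])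
        fix j assume j: "j < N"
        show "cdel St c $$ (a1 + a2, j) = 0"
          using j St by (auto simp: cdel_index Sti N_def insert_index_def ext_def carrier_matD[OF St] F0' G0')
      qed (simp add: N_def)
      moreover have "det R = 0"
      proof (rule det_row_zero[OF R, of "a1+a2-1"])
        fix j assume j: "j < a1+a2"
        show "R $$ (a1 + a2 - 1, j) = 0"
          using j pos by (auto simp: Ri ext_def F0' G0')
      qed (use pos in simp)
      ultimately show ?thesis unfolding St_def R_def by simp
    qed
  qed
qed

lemma minors_wide:
  assumes A: "A \<in> carrier_mat N (Suc N)"
  shows "minors A N = (\<lambda>c. det (cdel A c)) ` {..<Suc N}"
proof
  show "minors A N \<subseteq> (\<lambda>c. det (cdel A c)) ` {..<Suc N}"
  proof
    fix x assume "x \<in> minors A N"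
    then obtain I J where x: "x = det (submatrix A I J)" and I: "I \<subseteq> {..<N}" and J: "J \<subseteq> {..<Suc N}"
      and cI: "card I = N" and cJ: "card J = N" using A unfolding minors_def by auto
    have I': "I = {..<N}" using I cI by (simp add: card_subset_eq)
    have "card ({..<Suc N} - J) = 1" using J cJ by (simp add: card_Diff_subset finite_subset)
    then obtain c where c: "{..<Suc N} - J = {c}" by (auto simp: card_Suc_eq)
    then have "J = {..<Suc N} - {c}" "c < Suc N" using J by auto
    then show "x \<in> (\<lambda>c. det (cdel A c)) ` {..<Suc N}" using x I' submatrix_cdel[OF A] by auto
  qed
  show "(\<lambda>c. det (cdel A c)) ` {..<Suc N} \<subseteq> minors A N"
  proof
    fix x assume "x \<in> (\<lambda>c. det (cdel A c)) ` {..<Suc N}"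
    then obtain c where c: "c < Suc N" "x = det (cdel A c)" by auto
    then have "x = det (submatrix A {..<N} ({..<Suc N} - {c}))" using submatrix_cdel[OF A] by simp
    then show "x \<in> minors A N" unfolding minors_def using A c by (auto intro!: exI)
  qed
qed

lemma ig_from_rel:
  fixes m k s :: "nat \<Rightarrow> 'a::comm_ring_1"
  assumes rel: "\<And>c. c \<in> C \<Longrightarrow> s c * m c = R * k c" and sq: "\<And>c. c \<in> C \<Longrightarrow> s c * s c = 1"
    and one: "1 \<in> ideal_gen (k ` C)"
  shows "ideal_gen (m ` C) = ideal_gen {R}"
proof
  show "ideal_gen (m ` C) \<subseteq> ideal_gen {R}"
  proof (rule ig_sub, rule)
    fix x assume "x \<in> m ` C"
    then obtain c where c: "c \<in> C" "x = m c" by auto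
    have "x = (s c * s c) * m c" using sq c by simp
    also have "\<dots> = (s c * k c) * R" using rel[OF c(1)] by (metis mult.assoc mult.commute)
    finally show "x \<in> ideal_gen {R}" using ig_mult[OF ig_base[of R "{R}"]] by auto
  qed
  show "ideal_gen {R} \<subseteq> ideal_gen (m ` C)"
  proof (rule ig_sub, rule)
    fix x assume "x \<in> {R}"
    then have x: "x = R" by simp
    from one obtain T r where T: "1 = (\<Sum>y\<in>T. r y * y)" "finite T" "T \<subseteq> k ` C"
      unfolding ideal_gen_def by auto
    have "R = R * (\<Sum>y\<in>T. r y * y)" using T(1) by simp
    also have "\<dots> = (\<Sum>y\<in>T. r y * (R * y))" by (simp add: sum_distrib_left ac_simps)
    finally have "R = (\<Sum>y\<in>T. r y * (R * y))" .
    also have "\<dots> \<in> ideal_gen (m ` C)"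
    proof (rule ig_sum[OF T(2)])
      fix y assume "y \<in> T"
      then obtain c where c: "c \<in> C" "y = k c" using T by auto
      have "R * y = s c * m c" using rel[OF c(1)] c by simp
      have "m c \<in> ideal_gen (m ` C)" by (rule ig_base) (use c in auto)
      from ig_mult[OF this, of "r y * s c"] \<open>R * y = s c * m c\<close>
      show "r y * (R * y) \<in> ideal_gen (m ` C)" by (simp add: mult.assoc)
    qed
    finally show "x \<in> ideal_gen (m ` C)" using x by simp
  qed
qed

lemma minors_factor:
  fixes A B :: "'a::comm_ring_1 mat"
  assumes A: "A \<in> carrier_mat m l" and B: "B \<in> carrier_mat l k"
    and I0: "I0 \<subseteq> {..<m}" "card I0 = l" and d1: "det (submatrix A I0 UNIV) = 1"
  shows "ideal_gen (minors (A * B) l) = ideal_gen (minors B l)"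
proof
  have AB: "A * B \<in> carrier_mat m k" using A B by simp
  have cU: "{j. j < l \<and> j \<in> (UNIV::nat set)} = {..<l}" by auto
  show "ideal_gen (minors (A * B) l) \<subseteq> ideal_gen (minors B l)"
  proof (rule ig_sub, rule)
    fix x assume "x \<in> minors (A * B) l"
    then obtain I J where x: "x = det (submatrix (A*B) I J)" and I: "I \<subseteq> {..<m}" and J: "J \<subseteq> {..<k}"
      and cI: "card I = l" and cJ: "card J = l" using AB carrier_matD[OF A] carrier_matD[OF B] unfolding minors_def by auto
    have cI': "{i. i < m \<and> i \<in> I} = I" using I by auto
    have cJ': "{i. i < k \<and> i \<in> J} = J" using J by auto
    have sA: "submatrix A I UNIV \<in> carrier_mat l l" using A cI by (auto simp: dim_submatrix cI' cU)
    have sB: "submatrix B UNIV J \<in> carrier_mat l l" using B cJ by (auto simp: dim_submatrix cJ' cU)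
    have "x = det (submatrix A I UNIV) * det (submatrix B UNIV J)"
      using x submatrix_mult[OF A B I J] det_mult[OF sA sB] by simp
    moreover have "det (submatrix B UNIV J) \<in> minors B l"
      unfolding minors_def submatrix_UNIV_rows using B J cJ by (auto intro!: exI)
    ultimately show "x \<in> ideal_gen (minors B l)" using ig_mult[OF ig_base] by metis
  qed
  show "ideal_gen (minors B l) \<subseteq> ideal_gen (minors (A * B) l)"
  proof (rule ig_sub, rule)
    fix x assume "x \<in> minors B l"
    then obtain I J where x: "x = det (submatrix B I J)" and I: "I \<subseteq> {..<l}" and J: "J \<subseteq> {..<k}"
      and cI: "card I = l" and cJ: "card J = l" using B unfolding minors_def by auto
    have I': "I = {..<l}" using I cI by (simp add: card_subset_eq)
    have cI': "{i. i < m \<and> i \<in> I0} = I0" using I0 by auto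
    have cJ': "{i. i < k \<and> i \<in> J} = J" using J by auto
    have sA: "submatrix A I0 UNIV \<in> carrier_mat l l" using A I0 by (auto simp: dim_submatrix cI' cU)
    have sB: "submatrix B UNIV J \<in> carrier_mat l l" using B cJ by (auto simp: dim_submatrix cJ' cU)
    have "det (submatrix (A*B) I0 J) = det (submatrix A I0 UNIV) * det (submatrix B UNIV J)"
      using submatrix_mult[OF A B I0(1) J] det_mult[OF sA sB] by simp
    also have "\<dots> = x" using d1 x I' B by (simp add: submatrix_UNIV_rows)
    finally have "x \<in> minors (A*B) l" unfolding minors_def using AB I0 J cJ carrier_matD[OF A] carrier_matD[OF B] by (auto intro!: exI)
    then show "x \<in> ideal_gen (minors (A * B) l)" by (rule ig_base)
  qed
qed

lemma unit_ideal:
  fixes X :: "complex poly set"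
  assumes fin: "finite X" and nv: "\<And>t0. \<exists>x\<in>X. poly x t0 \<noteq> 0"
  shows "1 \<in> ideal_gen X"
proof -
  have "\<exists>g \<in> ideal_gen X. \<forall>x\<in>X. g dvd x" using fin
  proof (induction X rule: finite_induct)
    case empty
    then show ?case using ig_zero by blast
  next
    case (insert x X)
    then obtain g where g: "g \<in> ideal_gen X" "\<forall>y\<in>X. g dvd y" by blast
    have sub: "ideal_gen X \<subseteq> ideal_gen (insert x X)" by (rule ig_sub, auto intro: ig_base)
    define g' where "g' = gcd x g"
    have "g' = fst (bezout_coefficients x g) * x + snd (bezout_coefficients x g) * g"
      unfolding g'_def by (rule bezout_coefficients_fst_snd[symmetric])
    also have "\<dots> \<in> ideal_gen (insert x X)"
      by (rule ig_add; rule ig_mult) (use sub g in \<open>auto intro: ig_base\<close>)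
    finally have "g' \<in> ideal_gen (insert x X)" .
    moreover have "\<forall>y\<in>insert x X. g' dvd y" using g unfolding g'_def by (auto intro: dvd_trans)
    ultimately show ?case by blast
  qed
  then obtain g where g: "g \<in> ideal_gen X" "\<forall>x\<in>X. g dvd x" by blast
  have noroot: "poly g z \<noteq> 0" for z
  proof
    assume "poly g z = 0"
    obtain x where "x \<in> X" "poly x z \<noteq> 0" using nv by blast
    with g \<open>poly g z = 0\<close> show False by (auto elim!: dvdE)
  qed
  then have g0: "g \<noteq> 0" by auto
  have "degree g = 0"
  proof (rule ccontr)
    assume "degree g \<noteq> 0"
    then have "\<not> constant (poly g)" using constant_degree[of g] by simp
    then obtain z where "poly g z = 0" using fundamental_theorem_of_algebra by blast
    with noroot show False by blast
  qed
  then have "is_unit g" using is_unit_iff_degree[OF g0] by simp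
  then obtain h where "1 = g * h" by (auto elim!: dvdE)
  then have "1 = h * g" by (simp add: ac_simps)
  with ig_mult[OF g(1), of h] show ?thesis by simp
qed

lemma poly_sum_bound:
  fixes p :: "'a::comm_semiring_1 poly"
  assumes "degree p \<le> N"
  shows "poly p x = (\<Sum>i\<le>N. coeff p i * x ^ i)"
proof -
  have "poly p x = (\<Sum>i\<le>degree p. coeff p i * x ^ i)" by (rule poly_altdef)
  also have "\<dots> = (\<Sum>i\<le>N. coeff p i * x ^ i)"
    by (rule sum.mono_neutral_left, insert assms, auto simp: coeff_eq_0)
  finally show ?thesis .
qed

lemma homog_inner:
  assumes h: "homogeneous d f"
  shows "poly (coeff f i) z = (if i \<le> d then coeff (coeff f i) (d - i) * z ^ (d - i) else 0)"
proof -
  have "poly (coeff f i) z = (\<Sum>j\<le>degree (coeff f i). coeff (coeff f i) j * z ^ j)" by (rule poly_altdef)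
  also have "\<dots> = (\<Sum>j\<le>degree (coeff f i). if j = d - i \<and> i \<le> d then coeff (coeff f i) (d - i) * z ^ (d - i) else 0)"
  proof (rule sum.cong[OF refl])
    fix j
    show "coeff (coeff f i) j * z ^ j = (if j = d - i \<and> i \<le> d then coeff (coeff f i) (d - i) * z ^ (d - i) else 0)"
    proof (cases "coeff (coeff f i) j = 0")
      case False
      then have "i + j = d" using h unfolding homogeneous_def by blast
      then show ?thesis by auto
    qed auto
  qed
  also have "\<dots> = (if i \<le> d then coeff (coeff f i) (d - i) * z ^ (d - i) else 0)"
  proof (cases "i \<le> d \<and> d - i \<le> degree (coeff f i)")
    case True then show ?thesis by (simp add: sum.delta')
  next
    case False
    then show ?thesis
    proof (cases "i \<le> d")
      case True
      with False have "coeff (coeff f i) (d - i) = 0" by (simp add: coeff_eq_0)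
      then show ?thesis by simp
    qed simp
  qed
  finally show ?thesis .
qed

lemma homog_outer: assumes "homogeneous d f" "i > d" shows "coeff f i = 0"
proof (rule ccontr)
  assume "coeff f i \<noteq> 0"
  then have "coeff (coeff f i) (degree (coeff f i)) \<noteq> 0" by simp
  then have "i + degree (coeff f i) = d" using assms(1) unfolding homogeneous_def by blast
  then show False using assms(2) by simp
qed

lemma dehom_coeff: "coeff (dehom f) i = poly (coeff f i) 1"
  unfolding dehom_def by (simp add: coeff_map_poly)

lemma poly_dehom: "poly (dehom f) t0 = poly (poly f [:t0:]) 1"
proof -
  have "poly (dehom f) t0 = (\<Sum>i\<le>degree f. coeff (dehom f) i * t0 ^ i)"
    by (rule poly_sum_bound) (simp add: dehom_def map_poly_degree_leq)
  also have "\<dots> = (\<Sum>i\<le>degree f. poly (coeff f i * [:t0:] ^ i) 1)"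
    by (simp add: dehom_coeff poly_power)
  also have "\<dots> = poly (poly f [:t0:]) 1"
    by (simp add: poly_altdef[of f "[:t0:]"] poly_sum)
  finally show ?thesis .
qed

lemma poly_line: 
  assumes h: "homogeneous d f"
  shows "poly (poly f [:0,t0:]) z = z ^ d * poly (dehom f) t0"
proof -
  have "poly (poly f [:0,t0:]) z = (\<Sum>i\<le>degree f. poly (coeff f i) z * (t0 * z) ^ i)"
    by (simp add: poly_altdef[of f "[:0,t0:]"] poly_sum poly_power ac_simps)
  also have "\<dots> = (\<Sum>i\<le>degree f. z ^ d * (poly (coeff f i) 1 * t0 ^ i))"
  proof (rule sum.cong[OF refl])
    fix i
    show "poly (coeff f i) z * (t0 * z) ^ i = z ^ d * (poly (coeff f i) 1 * t0 ^ i)"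
    proof (cases "i \<le> d")
      case True
      then have "z ^ (d - i) * z ^ i = z ^ d" by (simp add: power_add[symmetric])
      then show ?thesis using True by (simp add: homog_inner[OF h] power_mult_distrib ac_simps)
    qed (simp add: homog_inner[OF h])
  qed
  also have "\<dots> = z ^ d * (\<Sum>i\<le>degree f. coeff (dehom f) i * t0 ^ i)"
    by (simp add: sum_distrib_left dehom_coeff)
  also have "(\<Sum>i\<le>degree f. coeff (dehom f) i * t0 ^ i) = poly (dehom f) t0"
    by (rule poly_sum_bound[symmetric]) (simp add: dehom_def map_poly_degree_leq)
  finally show ?thesis .
qed

lemma unit_homog:
  assumes h: "homogeneous n f" and n: "n \<ge> 1" and u: "is_unit f"
  shows False
proof -
  from u obtain g where fg: "1 = f * g" by (auto elim!: dvdE)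
  then have f0: "f \<noteq> 0" and g0: "g \<noteq> 0" by auto
  have "degree f + degree g = 0" using degree_mult_eq[OF f0 g0] fg[symmetric] by simp
  then have df: "degree f = 0" by simp
  have c0: "coeff f 0 * coeff g 0 = 1" using arg_cong[OF fg, of "\<lambda>x. coeff x 0"] by (simp add: coeff_mult_0)
  then have f00: "coeff f 0 \<noteq> 0" and g00: "coeff g 0 \<noteq> 0" by auto
  have "degree (coeff f 0) + degree (coeff g 0) = 0"
    using degree_mult_eq[OF f00 g00] c0 by simp
  then have "degree (coeff f 0) = 0" by simp
  then have "coeff (coeff f 0) 0 \<noteq> 0" using f00 by (metis leading_coeff_0_iff)
  then have "0 + 0 = n" using h unfolding homogeneous_def by blast
  then show False using n by simp
qed

lemma mult_const_coeff: "coeff (coeff (p * [:[:w:]:]) i) j = coeff (coeff p i) j * w"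
  by (simp add: mult.commute[of p] mult.commute)

lemma poly_phi_coeff:
  "poly (phi_coeff d a b c (h1,h2,h3) i) t0 = (if i \<le> d then
     coeff (coeff h1 i) (d-i) * poly (dehom a) t0 + coeff (coeff h2 i) (d-i) * poly (dehom b) t0
   + coeff (coeff h3 i) (d-i) * poly (dehom c) t0 else 0)"
  unfolding phi_coeff_def by simp

lemma phi_coeff_vanish: "i > d \<Longrightarrow> phi_coeff d a b c h i = 0"
  unfolding phi_coeff_def by simp

lemma zero_form_from_coeffs:
  assumes h1: "homogeneous d h1" and h2: "homogeneous d h2" and h3: "homogeneous d h3"
    and z: "\<forall>i. poly (phi_coeff d a b c (h1,h2,h3) i) t0 = 0"
  shows "h1 * [:[:poly (dehom a) t0:]:] + h2 * [:[:poly (dehom b) t0:]:] + h3 * [:[:poly (dehom c) t0:]:] = 0"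
    (is "?pw = 0")
proof (rule poly_eqI, rule poly_eqI)
  fix i j
  show "coeff (coeff ?pw i) j = coeff (coeff 0 i) j"
  proof (cases "i + j = d")
    case True
    then have "i \<le> d" "j = d - i" by auto
    then show ?thesis using z[rule_format, of i] by (simp add: poly_phi_coeff mult_const_coeff ac_simps)
  next
    case False
    then have "coeff (coeff h1 i) j = 0" "coeff (coeff h2 i) j = 0" "coeff (coeff h3 i) j = 0"
      using h1 h2 h3 unfolding homogeneous_def by auto
    then show ?thesis by (simp add: mult_const_coeff)
  qed
qed

lemma line_dvd:
  assumes h: "homogeneous d f" and z: "poly (dehom f) t0 = 0"
  shows "[:- [:0,t0:], 1:] dvd f"
proof -
  have "poly f [:0,t0:] = 0"
    using poly_line[OF h, of t0] z by (auto simp: poly_all_0_iff_0[symmetric])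
  then show ?thesis using poly_eq_0_iff_dvd by blast
qed

lemma nonvanish:
  assumes ha: "homogeneous n a" and hb: "homogeneous n b" and hc: "homogeneous n c"
    and n: "n \<ge> 1" and g: "gcd a (gcd b c) = 1" and mu: "mu_basis n \<mu> a b c p q"
  shows "\<exists>i. poly (phi_coeff \<mu> a b c p i) t0 \<noteq> 0 \<or> poly (phi_coeff (n-\<mu>) a b c q i) t0 \<noteq> 0"
proof (rule ccontr)
  assume "\<not> ?thesis"
  then have zp: "\<forall>i. poly (phi_coeff \<mu> a b c p i) t0 = 0" and zq: "\<forall>i. poly (phi_coeff (n-\<mu>) a b c q i) t0 = 0"
    by auto
  obtain p1 p2 p3 where p: "p = (p1,p2,p3)" by (cases p)
  obtain q1 q2 q3 where q: "q = (q1,q2,q3)" by (cases q)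
  define wa where "wa = poly (dehom a) t0"
  define wb where "wb = poly (dehom b) t0"
  define wc where "wc = poly (dehom c) t0"
  let ?W = "\<lambda>w. [:[:w:]:] :: form"
  have mb: "homogeneous \<mu> p1" "homogeneous \<mu> p2" "homogeneous \<mu> p3"
    "homogeneous (n-\<mu>) q1" "homogeneous (n-\<mu>) q2" "homogeneous (n-\<mu>) q3"
    using mu unfolding mu_basis_def p q by auto
  have all: "\<exists>\<alpha> \<beta>. h = (\<alpha>*p1+\<beta>*q1, \<alpha>*p2+\<beta>*q2, \<alpha>*p3+\<beta>*q3)" if "is_syzygy a b c h" for h
  proof -
    have "\<forall>h. is_syzygy a b c h \<longrightarrow> (\<exists>!(\<alpha>,\<beta>). h = (\<alpha>*p1+\<beta>*q1, \<alpha>*p2+\<beta>*q2, \<alpha>*p3+\<beta>*q3))"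
      using mu unfolding mu_basis_def p q by (simp only: prod.case) blast
    then have "\<exists>!(\<alpha>,\<beta>). h = (\<alpha>*p1+\<beta>*q1, \<alpha>*p2+\<beta>*q2, \<alpha>*p3+\<beta>*q3)"
      using that by blast
    then obtain x where "case x of (\<alpha>,\<beta>) \<Rightarrow> h = (\<alpha>*p1+\<beta>*q1, \<alpha>*p2+\<beta>*q2, \<alpha>*p3+\<beta>*q3)"
      by (rule ex1E) blast
    then show ?thesis by (cases x) auto
  qed
  have pw: "p1 * ?W wa + p2 * ?W wb + p3 * ?W wc = 0"
    using zero_form_from_coeffs[OF mb(1-3)] zp unfolding p wa_def wb_def wc_def by blast
  have qw: "q1 * ?W wa + q2 * ?W wb + q3 * ?W wc = 0"
    using zero_form_from_coeffs[OF mb(4-6)] zq unfolding q wa_def wb_def wc_def by blast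
  have kos: "h1 * ?W wa + h2 * ?W wb + h3 * ?W wc = 0" if syz: "is_syzygy a b c (h1,h2,h3)" for h1 h2 h3
  proof -
    obtain \<alpha> \<beta> where e: "(h1,h2,h3) = (\<alpha>*p1+\<beta>*q1, \<alpha>*p2+\<beta>*q2, \<alpha>*p3+\<beta>*q3)" using all[OF syz] by blast
    have "h1 * ?W wa + h2 * ?W wb + h3 * ?W wc = \<alpha> * (p1 * ?W wa + p2 * ?W wb + p3 * ?W wc) + \<beta> * (q1 * ?W wa + q2 * ?W wb + q3 * ?W wc)"
      using e by (simp add: algebra_simps)
    then show ?thesis using pw qw by simp
  qed
  have k1: "b * ?W wa = a * ?W wb" using kos[of b "-a" 0] by (simp add: is_syzygy_def algebra_simps)
  have k2: "c * ?W wa = a * ?W wc" using kos[of c 0 "-a"] by (simp add: is_syzygy_def algebra_simps)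
  have k3: "c * ?W wb = b * ?W wc" using kos[of 0 c "-b"] by (simp add: is_syzygy_def algebra_simps)
  have cancel: "x * ?W w * ?W (1/w) = x" if "w \<noteq> 0" for x w
  proof -
    have e: "?W w * ?W (1/w) = 1" using that by (simp add: one_pCons)
    have "x * ?W w * ?W (1/w) = x * (?W w * ?W (1/w))" by (simp only: mult.assoc)
    then show ?thesis unfolding e by simp
  qed
  have dv: "y dvd x" if "x * ?W w = y * ?W w'" "w \<noteq> 0" for x y w w'
  proof -
    have "x = x * ?W w * ?W (1/w)" using cancel[OF that(2), of x] by simp
    also have "\<dots> = y * ?W w' * ?W (1/w)" using that(1) by simp
    also have "\<dots> = y * (?W w' * ?W (1/w))" by (simp only: mult.assoc)
    finally have "x = y * (?W w' * ?W (1/w))" .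
    then show ?thesis by (rule dvdI)
  qed
  have gd: "f dvd gcd a (gcd b c)" if "f dvd a" "f dvd b" "f dvd c" for f
    using that by simp
  show False
  proof (cases "wa \<noteq> 0 \<or> wb \<noteq> 0 \<or> wc \<noteq> 0")
    case True
    then show False
    proof (elim disjE)
      assume w: "wa \<noteq> 0"
      have "a dvd gcd a (gcd b c)" by (rule gd) (use dv[OF k1 w] dv[OF k2 w] in auto)
      then show False using g unit_homog[OF ha n] by simp
    next
      assume w: "wb \<noteq> 0"
      have "b dvd gcd a (gcd b c)" by (rule gd) (use dv[OF k1[symmetric] w] dv[OF k3 w] in auto)
      then show False using g unit_homog[OF hb n] by simp
    next
      assume w: "wc \<noteq> 0"
      have "c dvd gcd a (gcd b c)" by (rule gd) (use dv[OF k2[symmetric] w] dv[OF k3[symmetric] w] in auto)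
      then show False using g unit_homog[OF hc n] by simp
    qed
  next
    case False
    let ?L = "[:- [:0,t0:], 1:] :: form"
    have "?L dvd gcd a (gcd b c)"
      by (rule gd; rule line_dvd) (use ha hb hc False in \<open>auto simp: wa_def wb_def wc_def\<close>)
    then have "is_unit ?L" using g by simp
    then obtain h where "1 = ?L * h" by (auto elim!: dvdE)
    then have "h \<noteq> 0" "degree (?L * h) = 0" by auto
    then have "degree ?L + degree h = 0" using degree_mult_eq[of ?L h] by simp
    then show False by simp
  qed
qed

definition sdiv :: "(nat \<Rightarrow> complex poly) \<Rightarrow> nat \<Rightarrow> nat \<Rightarrow> complex poly" where
  "sdiv F d i = (\<Sum>j\<in>{i<..d}. F j * [:0,1:] ^ (j - Suc i))"

lemma sdiv_vanish: "x \<ge> d \<Longrightarrow> sdiv F d x = 0"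
  unfolding sdiv_def by simp

lemma sdiv_rel:
  assumes v: "\<forall>x>d. F x = 0" and s: "(\<Sum>j\<le>d. F j * [:0,1:] ^ j) = 0"
  shows "F i = (if i = 0 then 0 else sdiv F d (i - 1)) - [:0,1:] * sdiv F d i"
proof -
  let ?T = "[:0,1:] :: complex poly"
  have Ts: "?T * sdiv F d i = (\<Sum>j\<in>{i<..d}. F j * ?T ^ (j - i))"
    unfolding sdiv_def sum_distrib_left
  proof (rule sum.cong[OF refl])
    fix j assume "j \<in> {i<..d}"
    then have "j - i = Suc (j - Suc i)" by auto
    then show "?T * (F j * ?T ^ (j - Suc i)) = F j * ?T ^ (j - i)" by (simp add: ac_simps)
  qed
  show ?thesis
  proof (cases "i = 0")
    case True
    have "(\<Sum>j\<le>d. F j * ?T ^ j) = F 0 + (\<Sum>j\<in>{0<..d}. F j * ?T ^ j)"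
    proof -
      have "{..d} = insert 0 {0<..d}" by auto
      then show ?thesis by simp
    qed
    then show ?thesis using True Ts s by (simp add: eq_neg_iff_add_eq_0 add.commute)
  next
    case False
    show ?thesis
    proof (cases "i \<le> d")
      case True
      have "sdiv F d (i - 1) = (\<Sum>j\<in>{i..d}. F j * ?T ^ (j - i))"
        unfolding sdiv_def using False by (intro sum.cong) auto
      also have "{i..d} = insert i {i<..d}" using True by auto
      also have "(\<Sum>j\<in>insert i {i<..d}. F j * ?T ^ (j - i)) = F i + ?T * sdiv F d i"
        using Ts by simp
      finally show ?thesis using False by simp
    next
      case False': False
      then show ?thesis using False v by (simp add: sdiv_def)
    qed
  qed
qed

lemma dehom_homog_sum:
  assumes h: "homogeneous d f"
  shows "poly (dehom f) t0 = (\<Sum>j\<le>d. coeff (coeff f j) (d - j) * t0 ^ j)"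
proof -
  have "degree (dehom f) \<le> d"
    by (rule degree_le) (auto simp: dehom_coeff homog_inner[OF h])
  then have "poly (dehom f) t0 = (\<Sum>j\<le>d. coeff (dehom f) j * t0 ^ j)" by (rule poly_sum_bound)
  also have "\<dots> = (\<Sum>j\<le>d. coeff (coeff f j) (d - j) * t0 ^ j)"
    by (rule sum.cong, auto simp: dehom_coeff homog_inner[OF h])
  finally show ?thesis .
qed

lemma phi_sum:
  assumes h1: "homogeneous d h1" and h2: "homogeneous d h2" and h3: "homogeneous d h3"
    and syz: "is_syzygy a b c (h1,h2,h3)"
  shows "(\<Sum>j\<le>d. phi_coeff d a b c (h1,h2,h3) j * [:0,1:] ^ j) = 0"
proof -
  have "poly (\<Sum>j\<le>d. phi_coeff d a b c (h1,h2,h3) j * [:0,1:] ^ j) t0 = 0" for t0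
  proof -
    let ?wa = "poly (dehom a) t0" and ?wb = "poly (dehom b) t0" and ?wc = "poly (dehom c) t0"
    have "poly (\<Sum>j\<le>d. phi_coeff d a b c (h1,h2,h3) j * [:0,1:] ^ j) t0
      = (\<Sum>j\<le>d. (coeff (coeff h1 j) (d-j) * ?wa + coeff (coeff h2 j) (d-j) * ?wb + coeff (coeff h3 j) (d-j) * ?wc) * t0 ^ j)"
      by (simp add: poly_sum poly_phi_coeff)
    also have "\<dots> = poly (dehom h1) t0 * ?wa + poly (dehom h2) t0 * ?wb + poly (dehom h3) t0 * ?wc"
      unfolding dehom_homog_sum[OF h1] dehom_homog_sum[OF h2] dehom_homog_sum[OF h3]
      by (simp add: sum_distrib_left sum.distrib algebra_simps)
    also have "\<dots> = poly (poly (h1 * a + h2 * b + h3 * c) [:t0:]) 1"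
      by (simp add: poly_dehom)
    also have "\<dots> = 0" using syz by (simp add: is_syzygy_def)
    finally show ?thesis .
  qed
  then show ?thesis using poly_all_0_iff_0 by blast
qed

lemma submatrix_intervals:
  assumes A: "A \<in> carrier_mat m l" and x: "x + k \<le> m" and y: "y + k \<le> l"
  shows "submatrix A {x..<x+k} {y..<y+k} = mat k k (\<lambda>(r,j). A $$ (x+r, y+j))"
proof -
  have cI: "{i. i < m \<and> x \<le> i \<and> i < x+k} = {x..<x+k}" using x by auto
  have cJ: "{i. i < l \<and> y \<le> i \<and> i < y+k} = {y..<y+k}" using y by auto
  show ?thesis
    by (rule eq_matI, insert A, auto simp: submatrix_def cI cJ pick_interval)
qed

interpretation poly_ev: comm_ring_hom "\<lambda>f::complex poly. poly f t0"
  by unfold_locales auto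

lemma det_lower_const:
  fixes E :: "complex mat"
  assumes E: "E \<in> carrier_mat k k" and low: "\<And>i j. i < j \<Longrightarrow> j < k \<Longrightarrow> E $$ (i,j) = 0"
    and diag: "\<And>i. i < k \<Longrightarrow> E $$ (i,i) = v"
  shows "det E = v ^ k"
proof -
  have "det E = prod_list (diag_mat E)" by (rule det_lower_triangular[OF low E])
  also have "diag_mat E = map (\<lambda>i. v) [0..<k]" using E diag by (auto simp: diag_mat_def)
  also have "prod_list \<dots> = v ^ k" by (simp add: map_replicate_const)
  finally show ?thesis .
qed

lemma tri_minor:
  fixes H :: "nat \<Rightarrow> complex poly"
  assumes M: "M \<in> carrier_mat m l" and x: "x + k \<le> m" and y: "y + k \<le> l"
    and ent: "\<And>r j. r < k \<Longrightarrow> j < k \<Longrightarrow> M $$ (x+r, y+j) = ext H (x+r) j"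
    and z: "\<forall>i<x. poly (H i) t0 = 0"
  shows "poly (det (submatrix M {x..<x+k} {y..<y+k})) t0 = poly (H x) t0 ^ k"
proof -
  let ?S = "mat k k (\<lambda>(r,j). M $$ (x+r, y+j))"
  have "poly (det ?S) t0 = det (map_mat (\<lambda>f. poly f t0) ?S)" by (rule poly_ev.hom_det[symmetric])
  also have "\<dots> = poly (H x) t0 ^ k"
  proof (rule det_lower_const)
    fix i j assume ij: "i < j" "j < k"
    show "map_mat (\<lambda>f. poly f t0) ?S $$ (i, j) = 0"
      using ij z ent[of i j] by (auto simp: ext_def)
  next
    fix i assume "i < k"
    then show "map_mat (\<lambda>f. poly f t0) ?S $$ (i, i) = poly (H x) t0"
      using ent[of i i] by (auto simp: ext_def)
  qed auto
  finally show ?thesis using submatrix_intervals[OF M x y] by simp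
qed

lemma det_Lc_unit:
  fixes c :: "'a::comm_ring_1"
  shows "det (mat k k (\<lambda>(r,j). ext (Lc c) (Suc r) j)) = 1"
proof -
  let ?M = "mat k k (\<lambda>(r,j). ext (Lc c) (Suc r) j)"
  have "det ?M = prod_list (diag_mat ?M)"
    by (rule det_upper_triangular) (auto simp: upper_triangular_def ext_def Lc_def)
  also have "diag_mat ?M = replicate k 1"
    by (rule nth_equalityI) (auto simp: diag_mat_def ext_def Lc_def)
  finally show ?thesis by simp
qed

lemma zero_mat_minors:
  assumes A: "\<And>i j. i < dim_row A \<Longrightarrow> j < dim_col A \<Longrightarrow> A $$ (i,j) = 0" and k: "k > 0"
  shows "ideal_gen (minors A k) = {0}"
proof
  have "minors A k \<subseteq> {0}"
  proof
    fix x assume "x \<in> minors A k"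
    then obtain I J where x: "x = det (submatrix A I J)" and I: "I \<subseteq> {..<dim_row A}" and J: "J \<subseteq> {..<dim_col A}"
      and cI: "card I = k" and cJ: "card J = k" unfolding minors_def by blast
    have cI': "{i. i < dim_row A \<and> i \<in> I} = I" using I by blast
    have cJ': "{i. i < dim_col A \<and> i \<in> J} = J" using J by blast
    have "dim_row (submatrix A I J) = card I" "dim_col (submatrix A I J) = card J"
      by (simp_all only: dim_submatrix cI' cJ')
    then have C: "submatrix A I J \<in> carrier_mat k k" using cI cJ by (simp only: carrier_mat_def mem_Collect_eq)
    have "det (submatrix A I J) = 0"
    proof (rule det_row_zero[OF C, of 0])
      fix j assume j: "j < k"
      have p: "pick I 0 \<in> I" "pick J j \<in> J" using pick_in_set_le[of 0 I] pick_in_set_le[of j J] k j cI cJ by auto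
      have "submatrix A I J $$ (0, j) = A $$ (pick I 0, pick J j)"
        by (rule submatrix_index) (use j k cI' cJ' cI cJ in auto)
      also have "\<dots> = 0" using p I J by (intro A) auto
      finally show "submatrix A I J $$ (0, j) = 0" .
    next
      show "0 < k" by (rule k)
    qed
    then show "x \<in> {0}" using x by simp
  qed
  then have "ideal_gen (minors A k) \<subseteq> ideal_gen {0}" by (intro ig_sub) (auto intro: ig_base)
  then show "ideal_gen (minors A k) \<subseteq> {0}" by (simp add: ig_single)
next
  show "{0} \<subseteq> ideal_gen (minors A k)" using ig_zero by auto
qed

lemma submatrix_UNIV_cols: "submatrix A I UNIV = submatrix A I {..<dim_col A}"
  by (rule eq_matI, auto simp: submatrix_def pick_UNIV pick_lessThan)

lemma ig_zero_single: "ideal_gen {0::'a::comm_ring_1} = {0}"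
  by (simp add: ig_single)

theorem proposition3p4:
  fixes n \<mu> :: nat and a b c :: form and p q :: "form \<times> form \<times> form"
  assumes "n \<ge> 3"
    and "homogeneous n a" and "homogeneous n b" and "homogeneous n c"
    and "gcd a (gcd b c) = 1"
    and "birational_onto_image a b c"
    and "mu_basis n \<mu> a b c p q"
  shows "fitting_ideal (sylvester_phi n \<mu> a b c p q) 0 = {0} \<and>
         fitting_ideal (sylvester_phi n \<mu> a b c p q) 1 = ideal_gen {Delta1 n \<mu> a b c p q} \<and>
         (\<forall>l. l > n - \<mu> \<longrightarrow> fitting_ideal (sylvester_phi n \<mu> a b c p q) l = UNIV)"
proof -
  note n3 = assms(1) and ha = assms(2) and hb = assms(3) and hc = assms(4) and g = assms(5)
    and mu = assms(7)
  obtain p1 p2 p3 where p: "p = (p1,p2,p3)" by (cases p)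
  obtain q1 q2 q3 where q: "q = (q1,q2,q3)" by (cases q)
  have mle: "\<mu> \<le> n - \<mu>" and hp: "homogeneous \<mu> p1" "homogeneous \<mu> p2" "homogeneous \<mu> p3"
    and hq: "homogeneous (n-\<mu>) q1" "homogeneous (n-\<mu>) q2" "homogeneous (n-\<mu>) q3"
    and sp: "is_syzygy a b c (p1,p2,p3)" and sq: "is_syzygy a b c (q1,q2,q3)"
    using mu unfolding mu_basis_def p q by auto
  define P where "P = phi_coeff \<mu> a b c p"
  define Q where "Q = phi_coeff (n-\<mu>) a b c q"
  define S where "S = sylvester_phi n \<mu> a b c p q"
  have S_eq: "S = syl_map_mat n 0 \<mu> (n-\<mu>) (n-\<mu>) \<mu> P Q"
    unfolding S_def sylvester_phi_def P_def Q_def ..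
  have S_car: "S \<in> carrier_mat n n" unfolding S_eq carrier_mat_def using mle by auto
  have Pv: "\<forall>x>\<mu>. P x = 0" unfolding P_def by (auto simp: phi_coeff_vanish)
  have Qv: "\<forall>x>n-\<mu>. Q x = 0" unfolding Q_def by (auto simp: phi_coeff_vanish)
  have Psum: "(\<Sum>j\<le>\<mu>. P j * [:0,1:] ^ j) = 0" unfolding P_def p by (rule phi_sum[OF hp sp])
  have Qsum: "(\<Sum>j\<le>n-\<mu>. Q j * [:0,1:] ^ j) = 0" unfolding Q_def q by (rule phi_sum[OF hq sq])
  have nv: "\<exists>i. poly (P i) t0 \<noteq> 0 \<or> poly (Q i) t0 \<noteq> 0" for t0
    unfolding P_def Q_def by (rule nonvanish[OF ha hb hc _ g mu]) (use n3 in simp)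
  have Sent: "S $$ (r,j) = (if j < n - \<mu> then ext P r j else ext Q r (j - (n-\<mu>)))"
    if "r < n" "j < n" for r j
    unfolding S_eq using syl_index[of r n j "n-\<mu>" \<mu> \<mu> P "n-\<mu>" Q 0] that Pv Qv mle by simp
  have part3: "fitting_ideal S l = UNIV" if l: "l > n - \<mu>" for l
  proof -
    have fe: "fitting_ideal S l = ideal_gen (minors S (n - l))" unfolding fitting_ideal_def using S_car by simp
    show ?thesis
    proof (cases "n - l = 0")
      case True
      have e1: "{i. i < dim_row S \<and> i \<in> ({}::nat set)} = {}" "{i. i < dim_col S \<and> i \<in> ({}::nat set)} = {}" by blast+
      have "dim_row (submatrix S {} {}) = 0" "dim_col (submatrix S {} {}) = 0"
        by (simp_all only: dim_submatrix e1 card.empty)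
      then have "submatrix S {} {} \<in> carrier_mat 0 0" unfolding carrier_mat_def by blast
      then have "det (submatrix S {} {}) = 1" by (rule det_dim_zero)
      then have "1 \<in> minors S 0" unfolding minors_def by (intro CollectI exI[of _ "{}"]) simp
      then show ?thesis using fe True ig_UNIV ig_base by metis
    next
      case False
      define k where "k = n - l"
      have k: "0 < k" "k < \<mu>" using False l unfolding k_def by auto
      define X where "X = (\<lambda>x. det (submatrix S {x..<x+k} {0..<0+k})) ` {..\<mu>}
          \<union> (\<lambda>x. det (submatrix S {x..<x+k} {n-\<mu>..<n-\<mu>+k})) ` {..n-\<mu>}"
      have sub: "X \<subseteq> minors S k"
      proof
        fix z assume "z \<in> X"
        then obtain x y where z: "z = det (submatrix S {x..<x+k} {y..<y+k})" and xy: "x + k \<le> n" "y + k \<le> n"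
          unfolding X_def
        proof (elim UnE imageE)
          fix x assume "z = det (submatrix S {x..<x+k} {0..<0+k})" "x \<in> {..\<mu>}"
          moreover have "x + k \<le> n" "0 + k \<le> n" using calculation(2) k mle by auto
          ultimately show thesis using that by blast
        next
          fix x assume "z = det (submatrix S {x..<x+k} {n-\<mu>..<n-\<mu>+k})" "x \<in> {..n-\<mu>}"
          moreover have "x + k \<le> n" "n-\<mu> + k \<le> n" using calculation(2) k mle by auto
          ultimately show thesis using that by blast
        qed
        have cI: "{i. i < n \<and> i \<in> {x..<x+k}} = {x..<x+k}" "{i. i < n \<and> i \<in> {y..<y+k}} = {y..<y+k}"
          using xy by auto
        show "z \<in> minors S k" unfolding minors_def z carrier_matD[OF S_car]
          by (intro CollectI exI[of _ "{x..<x+k}"] exI[of _ "{y..<y+k}"]) (use xy in auto)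
      qed
      have "1 \<in> ideal_gen X"
      proof (rule unit_ideal)
        show "finite X" unfolding X_def by simp
        fix t0
        from nv[of t0] obtain i where i: "poly (P i) t0 \<noteq> 0 \<or> poly (Q i) t0 \<noteq> 0" by blast
        show "\<exists>x\<in>X. poly x t0 \<noteq> 0"
        proof (cases "\<exists>i. poly (P i) t0 \<noteq> 0")
          case True
          define x where "x = (LEAST i. poly (P i) t0 \<noteq> 0)"
          have px: "poly (P x) t0 \<noteq> 0" unfolding x_def by (rule LeastI_ex) (rule True)
          have below: "\<forall>i<x. poly (P i) t0 = 0"
          proof (intro allI impI)
            fix i assume "i < x"
            then have "\<not> poly (P i) t0 \<noteq> 0" unfolding x_def by (rule not_less_Least)
            then show "poly (P i) t0 = 0" by simp
          qed
          have xm: "x \<le> \<mu>"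
          proof (rule ccontr)
            assume "\<not> x \<le> \<mu>"
            then have "P x = 0" using Pv by simp
            then show False using px by simp
          qed
          have "poly (det (submatrix S {x..<x+k} {0..<0+k})) t0 = poly (P x) t0 ^ k"
          proof (rule tri_minor[OF S_car _ _ _ below])
            show "x + k \<le> n" using xm k mle by linarith
            show "0 + k \<le> n" using k mle by linarith
            fix r j assume "r < k" "j < k"
            then show "S $$ (x + r, 0 + j) = ext P (x + r) j" using Sent[of "x+r" j] xm k mle by simp
          qed
          moreover have "det (submatrix S {x..<x+k} {0..<0+k}) \<in> X" unfolding X_def using xm by blast
          ultimately show ?thesis using px by (intro bexI[of _ "det (submatrix S {x..<x+k} {0..<0+k})"]) simp_all
        next
          case False
          then have Qi: "\<exists>i. poly (Q i) t0 \<noteq> 0" using i by blast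
          define x where "x = (LEAST i. poly (Q i) t0 \<noteq> 0)"
          have px: "poly (Q x) t0 \<noteq> 0" unfolding x_def by (rule LeastI_ex) (rule Qi)
          have below: "\<forall>i<x. poly (Q i) t0 = 0"
          proof (intro allI impI)
            fix i assume "i < x"
            then have "\<not> poly (Q i) t0 \<noteq> 0" unfolding x_def by (rule not_less_Least)
            then show "poly (Q i) t0 = 0" by simp
          qed
          have xm: "x \<le> n - \<mu>"
          proof (rule ccontr)
            assume "\<not> x \<le> n - \<mu>"
            then have "Q x = 0" using Qv by simp
            then show False using px by simp
          qed
          have "poly (det (submatrix S {x..<x+k} {n-\<mu>..<n-\<mu>+k})) t0 = poly (Q x) t0 ^ k"
          proof (rule tri_minor[OF S_car _ _ _ below])
            show "x + k \<le> n" using xm k mle by linarith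
            show "n - \<mu> + k \<le> n" using k mle by linarith
            fix r j assume "r < k" "j < k"
            then have a: "x + r < n" "n - \<mu> + j < n" "\<not> (n - \<mu> + j < n - \<mu>)" "n - \<mu> + j - (n - \<mu>) = j"
              using xm k mle by linarith+
            show "S $$ (x + r, n - \<mu> + j) = ext Q (x + r) j" using Sent[OF a(1,2)] a(3,4) by simp
          qed
          moreover have "det (submatrix S {x..<x+k} {n-\<mu>..<n-\<mu>+k}) \<in> X" unfolding X_def using xm by blast
          ultimately show ?thesis using px by (intro bexI[of _ "det (submatrix S {x..<x+k} {n-\<mu>..<n-\<mu>+k})"]) simp_all
        qed
      qed
      then have "1 \<in> ideal_gen (minors S k)" using ig_sub[OF order.trans[OF sub]] ig_base by blast
      then show ?thesis using fe ig_UNIV unfolding k_def by simp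
    qed
  qed
  have part12: "fitting_ideal S 0 = {0} \<and> fitting_ideal S 1 = ideal_gen {Delta1 n \<mu> a b c p q}"
  proof (cases "\<mu> = 0")
    case True
    have P0: "P x = 0" for x
    proof (cases "x = 0")
      case True
      then show ?thesis using Psum \<open>\<mu> = 0\<close> by simp
    next
      case False then show ?thesis using Pv \<open>\<mu> = 0\<close> by simp
    qed
    have Sz: "S $$ (i,j) = 0" if "i < dim_row S" "j < dim_col S" for i j
      using that Sent[of i j] S_car True by (simp add: ext_def P0)
    have f0: "fitting_ideal S 0 = {0}" unfolding fitting_ideal_def
      by (rule zero_mat_minors[OF Sz]) (use n3 S_car in auto)
    have f1: "fitting_ideal S 1 = {0}" unfolding fitting_ideal_def
      by (rule zero_mat_minors[OF Sz]) (use n3 S_car in auto)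
    have "Delta1 n \<mu> a b c p q = 0"
      unfolding Delta1_def det_def using True n3 by simp
    then show ?thesis using f0 f1 by (simp add: ig_zero_single)
  next
    case False
    then have m1: "\<mu> \<ge> 1" by simp
    define a1 where "a1 = \<mu> - 1"
    define a2 where "a2 = n - \<mu> - 1"
    have A1: "Suc a1 = \<mu>" and A2: "Suc a2 = n - \<mu>" and A12: "Suc (a1 + a2) = n - 1"
      and A12': "a1 + a2 = n - 2" and A12'': "Suc (Suc (a1 + a2)) = n" and pos: "1 \<le> a1 + a2"
      using m1 mle n3 unfolding a1_def a2_def by auto
    define T where "T = ([:0,1:] :: complex poly)"
    define Pt where "Pt = sdiv P \<mu>"
    define Qt where "Qt = sdiv Q (n - \<mu>)"
    have relP: "\<forall>i. P i = (if i = 0 then 0 else Pt (i - 1)) - T * Pt i"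
      unfolding Pt_def T_def using sdiv_rel[OF Pv Psum] by blast
    have relQ: "\<forall>i. Q i = (if i = 0 then 0 else Qt (i - 1)) - T * Qt i"
      unfolding Qt_def T_def using sdiv_rel[OF Qv Qsum] by blast
    have vPt: "\<forall>x>a1. Pt x = 0" unfolding Pt_def using A1 by (auto intro: sdiv_vanish)
    have vQt: "\<forall>x>a2. Qt x = 0" unfolding Qt_def using A2 by (auto intro: sdiv_vanish)
    define LM where "LM = syl_map_mat n 0 1 0 (Suc (a1+a2)) 0 (Lc T) (\<lambda>_. 0)"
    define St where "St = syl_map_mat (Suc (a1+a2)) 0 a1 a2 (Suc a2) (Suc a1) Pt Qt"
    define R where "R = syl_map_mat (a1+a2) 0 a1 a2 a2 a1 Pt Qt"
    define NN where "NN = syl_map_mat (a1+a2) 1 1 0 (a1+a2) 0 (Lc T) (\<lambda>_. 0)"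
    have LM_car: "LM \<in> carrier_mat n (Suc (a1+a2))" unfolding LM_def carrier_mat_def by simp
    have St_car: "St \<in> carrier_mat (Suc (a1+a2)) (Suc (Suc (a1+a2)))" unfolding St_def carrier_mat_def by simp
    have R_car: "R \<in> carrier_mat (a1+a2) (a1+a2)" unfolding R_def carrier_mat_def by simp
    have NN_car: "NN \<in> carrier_mat (a1+a2) (a1+a2)" unfolding NN_def carrier_mat_def by simp
    have SLM: "S = LM * St"
    proof -
      have "LM * St = syl_map_mat n 0 (Suc a1) (Suc a2) (Suc a2) (Suc a1) P Q"
        unfolding LM_def St_def by (rule syl_factor[OF relP relQ vPt vQt]) (use A12'' in auto)
      then show ?thesis unfolding S_eq A1 A2 by simp
    qed
    have DR: "Delta1 n \<mu> a b c p q = det (NN * R)"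
    proof -
      have "NN * R = syl_map_mat (a1+a2) 1 (Suc a1) (Suc a2) a2 a1 P Q"
        unfolding NN_def R_def by (rule syl_factor[OF relP relQ vPt vQt]) auto
      moreover have "Delta1 n \<mu> a b c p q = det (syl_map_mat (a1+a2) 1 (Suc a1) (Suc a2) a2 a1 P Q)"
        unfolding Delta1_def P_def Q_def A1 A2 A12'
        by (metis A1 A2 diff_Suc_1)
      ultimately show ?thesis by simp
    qed
    have NN_eq: "NN = mat (a1+a2) (a1+a2) (\<lambda>(r,j). ext (Lc T) (Suc r) j)"
      unfolding NN_def by (rule eq_matI) (auto simp: syl_index Lc_def)
    have detNN: "det NN = 1" unfolding NN_eq by (rule det_Lc_unit)
    have detR: "Delta1 n \<mu> a b c p q = det R"
      unfolding DR det_mult[OF NN_car R_car] detNN by simp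
    have knv: "\<exists>x\<in>kv a2 Pt Qt ` {..<Suc (Suc (a1+a2))}. poly x t0 \<noteq> 0" for t0
    proof (rule ccontr)
      assume "\<not> ?thesis"
      then have z: "\<And>c. c < Suc (Suc (a1+a2)) \<Longrightarrow> poly (kv a2 Pt Qt c) t0 = 0" by auto
      have zQ: "poly (Qt j) t0 = 0" for j
      proof (cases "j < Suc a2")
        case True then show ?thesis using z[of j] by (simp add: kv_def)
      next
        case False then show ?thesis using vQt by simp
      qed
      have zP: "poly (Pt j) t0 = 0" for j
      proof (cases "j < Suc a1")
        case True then show ?thesis using z[of "Suc a2 + j"] by (simp add: kv_def)
      next
        case False then show ?thesis using vPt by simp
      qed
      have "poly (P i) t0 = 0" "poly (Q i) t0 = 0" for i
        using relP relQ zP zQ by (auto simp: T_def)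
      then show False using nv[of t0] by blast
    qed
    have unit1: "1 \<in> ideal_gen (kv a2 Pt Qt ` {..<Suc (Suc (a1+a2))})"
      by (rule unit_ideal) (use knv in auto)
    have detS: "det S = 0"
    proof -
      define v where "v = vec n (kv a2 Pt Qt)"
      have v: "v \<in> carrier_vec n" unfolding v_def by simp
      obtain c where c: "c < n" "poly (kv a2 Pt Qt c) 0 \<noteq> 0" using knv[of 0] A12'' by auto
      have v0: "v \<noteq> 0\<^sub>v n"
      proof
        assume "v = 0\<^sub>v n"
        then have "v $ c = 0" using c by simp
        then show False using c unfolding v_def by simp
      qed
      have "St *\<^sub>v v = 0\<^sub>v (Suc (a1+a2))"
        using St_kernel[OF vPt vQt, of "Suc (a1+a2)"] A12'' unfolding v_def St_def by (simp add: add.commute)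
      then have "S *\<^sub>v v = LM *\<^sub>v 0\<^sub>v (Suc (a1+a2))"
        unfolding SLM using assoc_mult_mat_vec[OF LM_car St_car, of v] v A12'' by simp
      also have "\<dots> = 0\<^sub>v n" using LM_car by (intro eq_vecI) auto
      finally have "S *\<^sub>v v = 0\<^sub>v n" .
      then show ?thesis using det_0_iff_vec_prod_zero[OF S_car] v v0 by blast
    qed
    have f0: "fitting_ideal S 0 = {0}"
    proof -
      have "minors S n \<subseteq> {0}"
      proof
        fix x assume "x \<in> minors S n"
        then obtain I J where x: "x = det (submatrix S I J)" and I: "I \<subseteq> {..<n}" and J: "J \<subseteq> {..<n}"
          and cI: "card I = n" and cJ: "card J = n" unfolding minors_def using S_car by auto
        have "I = {..<n}" "J = {..<n}" using I J cI cJ by (simp_all add: card_subset_eq)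
        moreover have "submatrix S {..<n} {..<n} = S"
          by (rule eq_matI) (use S_car in \<open>auto simp: submatrix_def pick_lessThan\<close>)
        ultimately show "x \<in> {0}" using x detS by simp
      qed
      then have "ideal_gen (minors S n) \<subseteq> ideal_gen {0}" by (intro ig_sub) (auto intro: ig_base)
      then show ?thesis unfolding fitting_ideal_def using S_car ig_zero ig_zero_single by auto
    qed
    have subLM: "det (submatrix LM {1..<n} UNIV) = 1"
    proof -
      have "submatrix LM {1..<n} UNIV = submatrix LM {1..<1 + Suc (a1+a2)} {0..<0 + Suc (a1+a2)}"
        unfolding submatrix_UNIV_cols using LM_car A12'' by (simp add: atLeast0LessThan)
      also have "\<dots> = mat (Suc (a1+a2)) (Suc (a1+a2)) (\<lambda>(r,j). LM $$ (1+r, 0+j))"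
        by (rule submatrix_intervals[OF LM_car]) (use A12'' in auto)
      also have "\<dots> = mat (Suc (a1+a2)) (Suc (a1+a2)) (\<lambda>(r,j). ext (Lc T) (Suc r) j)"
        by (rule eq_matI) (use A12'' in \<open>auto simp: LM_def syl_index Lc_def\<close>)
      finally show ?thesis using det_Lc_unit by simp
    qed
    have "fitting_ideal S 1 = ideal_gen (minors (LM * St) (Suc (a1+a2)))"
      unfolding fitting_ideal_def SLM using LM_car St_car A12 by simp
    also have "\<dots> = ideal_gen (minors St (Suc (a1+a2)))"
      by (rule minors_factor[OF LM_car St_car _ _ subLM]) (use A12'' in auto)
    also have "minors St (Suc (a1+a2)) = (\<lambda>c. det (cdel St c)) ` {..<Suc (Suc (a1+a2))}"
      by (rule minors_wide[OF St_car])
    also have "ideal_gen \<dots> = ideal_gen {det R}"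
    proof (rule ig_from_rel[OF _ _ unit1])
      fix c assume "c \<in> {..<Suc (Suc (a1+a2))}"
      then have c: "c < Suc (Suc (a1+a2))" by simp
      have e: "(-1)^c * det (cdel St c) = (-1)^a2 * det R * kv a2 Pt Qt c"
        unfolding St_def R_def by (rule main_minors[OF vPt vQt pos c])
      have sq: "(-1::complex poly)^a2 * (-1)^a2 = 1" by (simp add: power_mult_distrib[symmetric])
      show "((-1)^a2 * (-1)^c) * det (cdel St c) = det R * kv a2 Pt Qt c"
        using arg_cong[OF e, of "\<lambda>x. (-1)^a2 * x"] sq by (simp add: ac_simps)
      show "((-1::complex poly)^a2 * (-1)^c) * ((-1)^a2 * (-1)^c) = 1"
        by (simp add: power_mult_distrib[symmetric] ac_simps)
    qed
    finally have f1: "fitting_ideal S 1 = ideal_gen {Delta1 n \<mu> a b c p q}" unfolding detR .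
    show ?thesis using f0 f1 by simp
  qed
  show ?thesis using part12 part3 unfolding S_def by simp
qed

end
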